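(* Let $(\xi_k)_{k\in\mathbb{N}}$ be i.i.d. exponential random variables with unit mean, $S_j=\xi_1+\dots+\xi_j$, and consider the associated Crump–Mode–Jagers process with $Y^{(j)}_m$ and $U_m(t)=t^m/m!$ as in the context. Let $k=k(t)$ be integer-valued with $k(t)\to\infty$ and $k(t)=o(t)$ as $t\to\infty$. Then $$\mathbb{E}\Big(\sum_{j\geq 1}\big(Y^{(j)}_{k-1}(t-S_j)-U_{k-1}(t-S_j)\big)\mathbf{1}_{\{S_j\leq t\}}\Big)^2\sim\frac{1}{4}\frac{t^{2k}}{(k!)^2}\Big(\frac{k}{t}\Big)^2,\qquad t\to\infty.$$
   Context: The CMJ process: at time $0$ there is one individual (the ancestor), which produces first-generation offspring at birth times given by the point process $\sum_{n\ge1}\delta_{S_n}$; each individual born at time $s$ produces its own children at times $s+$(points of an independent copy of this point process); all individuals act independently. For $m\in\mathbb{N}$, $Y_m(t)$ is the number of $m$-th generation individuals with birth times $\le t$, and $U_m(t):=\mathbb{E}Y_m(t)$, which equals $t^m/m!$ for $t\ge 0$ in the exponential case. For $j\in\mathbb{N}$ and $m\ge1$, $Y^{(j)}_m(t)$ is the number of $(m+1)$-st generation descendants of the first-generation individual born at time $S_j$ that are born in $[S_j,S_j+t]$; the processes $(Y^{(j)}_m(t))_{t\ge0}$, $j\in\mathbb{N}$, are independent copies of $(Y_m(t))_{t\ge0}$, independent of $(S_n)$. *)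

theory Defs
  imports "HOL-Probability.Probability" "HOL-Library.Landau_Symbols"
begin

text \<open>Individuals are labelled by lists
  of positive naturals; the individual with label v has i.i.d. inter-birth times
  x v 0, x v 1, ...; its n-th child (n \<ge> 1) has label v @ [n] and is born
  cmj_S x v n = x v 0 + ... + x v (n-1) time units after v.\<close>

definition cmj_S :: "(nat list \<Rightarrow> nat \<Rightarrow> real) \<Rightarrow> nat list \<Rightarrow> nat \<Rightarrow> real" where
  "cmj_S x v n = (\<Sum>l<n. x v l)"

fun cmj_birth :: "(nat list \<Rightarrow> nat \<Rightarrow> real) \<Rightarrow> nat list \<Rightarrow> nat list \<Rightarrow> real" where
  "cmj_birth x v [] = 0"
| "cmj_birth x v (n # u) = cmj_S x v n + cmj_birth x (v @ [n]) u"

text \<open>Number of m-th generation descendants (relative to v) of v born within time t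
  after the birth of v.  With v = [] this is Y_m(t); with v = [j] it is Y^(j)_m(t).\<close>
definition cmj_Y :: "(nat list \<Rightarrow> nat \<Rightarrow> real) \<Rightarrow> nat list \<Rightarrow> nat \<Rightarrow> real \<Rightarrow> real" where
  "cmj_Y x v m t = real (card {u. length u = m \<and> (\<forall>i\<in>set u. 1 \<le> i) \<and> cmj_birth x v u \<le> t})"

definition cmj_U :: "nat \<Rightarrow> real \<Rightarrow> real" where
  "cmj_U m t = t ^ m / fact m"

end

theory Submission
  imports Defs "HOL-Probability.Probability" "HOL-Library.Landau_Symbols" "HOL-Real_Asymp.Real_Asymp"
begin


type_synonym tr = "nat list \<times> nat \<Rightarrow> real"

definition E1 :: "real measure" where "E1 = density lborel (exponential_density 1)"
definition PP :: "tr measure" where "PP = PiM UNIV (\<lambda>_. E1)"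

lemma prob_space_E1: "prob_space E1"
  unfolding E1_def by (rule prob_space_exponential_density) simp

lemma sets_E1[measurable_cong]: "sets E1 = sets borel"
  unfolding E1_def by simp

lemma sets_PP[measurable_cong]: "sets PP = sets (PiM UNIV (\<lambda>_. borel::real measure))"
  unfolding PP_def by (intro sets_PiM_cong) (auto simp: sets_E1)

lemma space_PP: "space PP = UNIV"
  unfolding PP_def by (simp add: space_PiM E1_def)

interpretation PP: prob_space PP
  unfolding PP_def by (intro prob_space_PiM prob_space_E1)

lemma PP_component: "distr PP E1 (\<lambda>x. x i) = E1"
  unfolding PP_def by (intro distr_PiM_component prob_space_E1) auto

lemma PP_indep: "PP.indep_vars (\<lambda>_. borel) (\<lambda>i x. x i) UNIV"
proof -
  have rv: "\<And>i. PP.random_variable borel (\<lambda>x. x i)" by measurable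
  have a: "distr PP (PiM UNIV (\<lambda>_. borel)) (\<lambda>x. \<lambda>i\<in>UNIV. x i) = PP"
  proof -
    have "(\<lambda>x. \<lambda>i\<in>UNIV. x i) = (\<lambda>x::tr. x)" by (auto simp: restrict_def)
    then show ?thesis by (simp add: distr_id2 sets_PP)
  qed
  have b: "distr PP borel (\<lambda>x. x i) = E1" for i
  proof -
    have "distr PP borel (\<lambda>x. x i) = distr PP E1 (\<lambda>x. x i)"
      by (rule distr_cong) (auto simp: sets_E1)
    then show ?thesis using PP_component by simp
  qed
  show ?thesis
    apply (subst PP.indep_vars_iff_distr_eq_PiM[OF _ rv])
     apply simp
    apply (simp only: a b)
    apply (simp add: PP_def)
    done
qed

lemma measurable_restrict_UNIV:
  fixes K :: "'i set"
  shows "(\<lambda>x. x) \<in> measurable (PiM K (\<lambda>_. borel::real measure)) (PiM UNIV (\<lambda>_. borel::real measure))"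
proof (rule measurable_PiM_single')
  fix i :: 'i
  show "(\<lambda>\<omega>::'i\<Rightarrow>real. \<omega> i) \<in> borel_measurable (PiM K (\<lambda>_. borel))"
  proof (cases "i \<in> K")
    case True then show ?thesis by measurable
  next
    case False
    have "\<And>w. w \<in> space (PiM K (\<lambda>_. borel::real measure)) \<Longrightarrow> w i = undefined"
      using False by (auto simp: space_PiM PiE_def extensional_def)
    then show ?thesis
      using measurable_cong[of "PiM K (\<lambda>_. borel::real measure)" "\<lambda>\<omega>. \<omega> i" "\<lambda>_. undefined" borel] by simp
  qed
qed (auto simp: space_PiM)

lemma T2:
  fixes H :: "tr \<Rightarrow> tr \<Rightarrow> ennreal"
  assumes disj: "K1 \<inter> K2 = {}"
    and Hm: "(\<lambda>(x,y). H x y) \<in> borel_measurable (PP \<Otimes>\<^sub>M PP)"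
    and Hr: "\<And>x y. H x y = H (restrict x K1) (restrict y K2)"
  shows "(\<integral>\<^sup>+x. H x x \<partial>PP) = (\<integral>\<^sup>+x. \<integral>\<^sup>+y. H x y \<partial>PP \<partial>PP)"
proof -
  let ?B = "\<lambda>K. PiM K (\<lambda>_. borel::real measure)"
  let ?r1 = "\<lambda>x::tr. restrict x K1"
  let ?r2 = "\<lambda>x::tr. restrict x K2"
  have ind: "PP.indep_var (?B K1) ?r1 (?B K2) ?r2"
    using PP.indep_var_restrict[OF PP_indep disj] by simp
  have rv1[measurable]: "?r1 \<in> measurable PP (?B K1)" and rv2[measurable]: "?r2 \<in> measurable PP (?B K2)"
    using ind by (auto dest: PP.indep_var_rv1 PP.indep_var_rv2)
  have eq: "distr PP (?B K1) ?r1 \<Otimes>\<^sub>M distr PP (?B K2) ?r2 = distr PP (?B K1 \<Otimes>\<^sub>M ?B K2) (\<lambda>x. (?r1 x, ?r2 x))"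
    using ind unfolding PP.indep_var_distribution_eq by simp
  interpret D1: prob_space "distr PP (?B K1) ?r1" by (rule PP.prob_space_distr) simp
  interpret D2: prob_space "distr PP (?B K2) ?r2" by (rule PP.prob_space_distr) simp
  interpret D12: pair_sigma_finite "distr PP (?B K1) ?r1" "distr PP (?B K2) ?r2" ..
  have id1: "(\<lambda>x. x) \<in> measurable (?B K1) PP" and id2: "(\<lambda>x. x) \<in> measurable (?B K2) PP"
    using measurable_restrict_UNIV by (auto simp: measurable_cong_sets[OF refl sets_PP])
  have Hm': "(\<lambda>(a,b). H a b) \<in> borel_measurable (?B K1 \<Otimes>\<^sub>M ?B K2)"
  proof -
    have "(\<lambda>p. (fst p, snd p)) \<in> measurable (?B K1 \<Otimes>\<^sub>M ?B K2) (PP \<Otimes>\<^sub>M PP)"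
      apply (rule measurable_Pair)
      using measurable_comp[OF measurable_fst id1] measurable_comp[OF measurable_snd id2]
      by (auto simp: o_def)
    from measurable_comp[OF this Hm] show ?thesis by (simp add: o_def split_beta)
  qed
  have "(\<integral>\<^sup>+x. H x x \<partial>PP) = (\<integral>\<^sup>+x. (\<lambda>(a,b). H a b) (?r1 x, ?r2 x) \<partial>PP)"
    by (subst Hr) simp
  also have "\<dots> = (\<integral>\<^sup>+p. (\<lambda>(a,b). H a b) p \<partial>distr PP (?B K1 \<Otimes>\<^sub>M ?B K2) (\<lambda>x. (?r1 x, ?r2 x)))"
    by (rule nn_integral_distr[symmetric]) (auto simp: Hm')
  also have "\<dots> = (\<integral>\<^sup>+p. (\<lambda>(a,b). H a b) p \<partial>(distr PP (?B K1) ?r1 \<Otimes>\<^sub>M distr PP (?B K2) ?r2))"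
    by (simp only: eq)
  also have "\<dots> = (\<integral>\<^sup>+a. \<integral>\<^sup>+b. H a b \<partial>distr PP (?B K2) ?r2 \<partial>distr PP (?B K1) ?r1)"
    by (subst D2.nn_integral_fst[symmetric]) (auto simp: Hm' measurable_cong_sets[OF sets_pair_measure_cong[OF sets_distr sets_distr] refl])
  also have "\<dots> = (\<integral>\<^sup>+x. \<integral>\<^sup>+b. H (?r1 x) b \<partial>distr PP (?B K2) ?r2 \<partial>PP)"
    by (rule nn_integral_distr) (auto intro!: D2.borel_measurable_nn_integral simp: Hm' measurable_cong_sets[OF sets_pair_measure_cong[OF refl sets_distr] refl])
  also have "\<dots> = (\<integral>\<^sup>+x. \<integral>\<^sup>+y. H (?r1 x) (?r2 y) \<partial>PP \<partial>PP)"
  proof (rule nn_integral_cong)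
    fix x
    have "(\<lambda>b. H (?r1 x) b) \<in> borel_measurable (?B K2)"
    proof -
      have "?r1 x \<in> space (?B K1)" by (simp add: space_PiM)
      then show ?thesis using Hm' by simp
    qed
    then show "(\<integral>\<^sup>+b. H (?r1 x) b \<partial>distr PP (?B K2) ?r2) = (\<integral>\<^sup>+y. H (?r1 x) (?r2 y) \<partial>PP)"
      using nn_integral_distr[OF rv2, of "H (?r1 x)"] by simp
  qed
  also have "\<dots> = (\<integral>\<^sup>+x. \<integral>\<^sup>+y. H x y \<partial>PP \<partial>PP)"
    by (simp only: Hr[symmetric])
  finally show ?thesis .
qed


definition SS :: "tr \<Rightarrow> nat \<Rightarrow> real" where "SS x j = (\<Sum>l<j. x ([], l))"
definition sub :: "nat \<Rightarrow> tr \<Rightarrow> tr" where "sub j x = (\<lambda>(v,l). x (j#v, l))"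

lemma PP_comp_borel: "distr PP borel (\<lambda>x. x i) = E1"
proof -
  have "distr PP borel (\<lambda>x. x i) = distr PP E1 (\<lambda>x. x i)"
    by (rule distr_cong) (auto simp: sets_E1)
  then show ?thesis using PP_component by simp
qed

lemma PP_reindex:
  fixes f :: "'b \<Rightarrow> nat list \<times> nat"
  assumes "inj f"
  shows "distr PP (PiM UNIV (\<lambda>_. E1)) (\<lambda>x n. x (f n)) = PiM UNIV (\<lambda>_. E1)"
proof -
  have "distr (PiM UNIV (\<lambda>_. E1)) (PiM UNIV (\<lambda>i. E1)) (\<lambda>\<omega>. \<lambda>n\<in>UNIV. \<omega> (f n)) = PiM UNIV (\<lambda>i. E1)"
    by (rule distr_PiM_reindex) (simp_all add: prob_space_E1 assms)
  moreover have "(\<lambda>\<omega>::tr. \<lambda>n\<in>UNIV. \<omega> (f n)) = (\<lambda>x n. x (f n))" by (auto simp: restrict_def)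
  ultimately show ?thesis by (simp add: PP_def)
qed

lemma measurable_sub[measurable]: "sub j \<in> measurable PP PP"
  unfolding sub_def measurable_cong_sets[OF sets_PP sets_PP]
  by (rule measurable_PiM_single') (auto simp: split_beta)

lemma measurable_SS[measurable]: "(\<lambda>x. SS x j) \<in> borel_measurable PP"
  unfolding SS_def by measurable

lemma measurable_sub'[measurable]: "sub j \<in> measurable (PiM UNIV (\<lambda>_. borel::real measure)) (PiM UNIV (\<lambda>_. borel::real measure))"
  using measurable_sub measurable_cong_sets[OF sets_PP sets_PP] by simp

lemma measurable_SS'[measurable]: "(\<lambda>x. SS x j) \<in> borel_measurable (PiM UNIV (\<lambda>_. borel::real measure))"
  unfolding SS_def by measurable

lemma sub_law: "distr PP PP (sub j) = PP"
proof -
  have "inj (\<lambda>(v,l). (j#v, l))" by (auto simp: inj_def)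
  from PP_reindex[OF this] have "distr PP PP (\<lambda>x n. x (case n of (v,l) \<Rightarrow> (j#v,l))) = PP"
    by (simp add: PP_def)
  moreover have "(\<lambda>x n. x (case n of (v,l) \<Rightarrow> (j#v,l))) = sub j"
    by (auto simp: sub_def fun_eq_iff split: prod.split)
  ultimately show ?thesis by simp
qed

lemma nn_integral_sub:
  assumes "F \<in> borel_measurable PP"
  shows "(\<integral>\<^sup>+x. F (sub j x) \<partial>PP) = (\<integral>\<^sup>+y. F y \<partial>PP)"
proof -
  have "(\<integral>\<^sup>+y. F y \<partial>PP) = (\<integral>\<^sup>+y. F y \<partial>distr PP PP (sub j))" by (simp add: sub_law)
  also have "\<dots> = (\<integral>\<^sup>+x. F (sub j x) \<partial>PP)" by (rule nn_integral_distr) (auto simp: assms)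
  finally show ?thesis by simp
qed

lemma PP_indep0: "PP.indep_vars (\<lambda>_. borel) (\<lambda>l x. x ([], l)) UNIV"
proof -
  have rv: "\<And>i. PP.random_variable borel (\<lambda>x. x ([], i))" by measurable
  have "inj (\<lambda>l::nat. ([]::nat list, l))" by (auto simp: inj_def)
  note r = PP_reindex[OF this]
  have a: "distr PP (PiM UNIV (\<lambda>_. borel)) (\<lambda>x. \<lambda>l\<in>UNIV. x ([], l)) = PiM UNIV (\<lambda>_. E1)"
  proof -
    have e1: "(\<lambda>x. \<lambda>l\<in>UNIV. x ([], l)) = (\<lambda>x l. x ([]::nat list, l::nat))" by (auto simp: restrict_def)
    have e2: "distr PP (PiM UNIV (\<lambda>_. borel)) (\<lambda>x l. x ([]::nat list, l::nat)) = distr PP (PiM UNIV (\<lambda>_. E1)) (\<lambda>x l. x ([]::nat list, l::nat))"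
      by (rule distr_cong) (auto intro!: sets_PiM_cong simp: sets_E1)
    show ?thesis by (simp only: e1 e2 r)
  qed
  show ?thesis
    apply (subst PP.indep_vars_iff_distr_eq_PiM[OF _ rv])
     apply simp
    apply (simp only: a PP_comp_borel)
    done
qed

lemma exp_distributed: "distributed PP lborel (\<lambda>x. x i) (exponential_density 1)"
proof -
  have "distr PP lborel (\<lambda>x. x i) = distr PP borel (\<lambda>x. x i)"
    by (rule distr_cong) auto
  then show ?thesis
    unfolding distributed_def using PP_comp_borel by (simp add: E1_def)
qed

lemma erlang_block:
  assumes "finite L" "L \<noteq> {}"
  shows "distributed PP lborel (\<lambda>x. \<Sum>l\<in>L. x ([], l)) (erlang_density (card L - 1) 1)"
  by (rule PP.exponential_distributed_sum[OF assms]) (auto intro: exp_distributed PP.indep_vars_subset[OF PP_indep0])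

lemma SS_distributed:
  assumes "1 \<le> j"
  shows "distributed PP lborel (\<lambda>x. SS x j) (erlang_density (j - 1) 1)"
proof -
  have "0 \<in> {..<j}" using assms by auto
  then have "{..<j} \<noteq> {}" by blast
  then show ?thesis unfolding SS_def using erlang_block[of "{..<j}"] by simp
qed

lemma erlang_sum1: "(\<Sum>i. ennreal (erlang_density i 1 r)) = indicator {0..} r"
proof (cases "r < 0")
  case True then show ?thesis by (simp add: erlang_density_def)
next
  case False
  have "(\<lambda>n. r^n /\<^sub>R fact n) sums exp r" by (rule exp_converges)
  then have "(\<lambda>n. r^n / fact n) sums exp r" by (simp add: divide_inverse_commute scaleR_conv_of_real)
  then have "(\<lambda>n. r^n / fact n * exp (-r)) sums (exp r * exp (-r))" by (rule sums_mult2)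
  then have "(\<lambda>n. erlang_density n 1 r) sums 1"
    using False by (simp add: erlang_density_def exp_minus field_simps)
  then have "(\<Sum>i. ennreal (erlang_density i 1 r)) = ennreal 1"
    by (rule suminf_ennreal_eq[rotated]) (auto simp: erlang_density_def)
  then show ?thesis using False by simp
qed

lemma measurable_slice_PP:
  assumes "(\<lambda>(r,y). F r y) \<in> borel_measurable (borel \<Otimes>\<^sub>M PP)"
  shows "F r \<in> borel_measurable PP"
  using measurable_compose_Pair1[of r borel, OF _ assms] by simp

lemma term1:
  fixes F :: "real \<Rightarrow> tr \<Rightarrow> ennreal"
  assumes j: "1 \<le> j" and Fm[measurable]: "(\<lambda>(r,y). F r y) \<in> borel_measurable (borel \<Otimes>\<^sub>M PP)"
  shows "(\<integral>\<^sup>+x. F (SS x j) (sub j x) \<partial>PP) = (\<integral>\<^sup>+r. erlang_density (j-1) 1 r * (\<integral>\<^sup>+y. F r y \<partial>PP) \<partial>lborel)"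
proof -
  let ?K1 = "range (\<lambda>l::nat. ([]::nat list, l))"
  let ?K2 = "{(j#v, l) |v l. True}"
  have fm[measurable]: "(\<lambda>r. \<integral>\<^sup>+y. F r y \<partial>PP) \<in> borel_measurable borel"
    by (rule PP.borel_measurable_nn_integral) (simp add: Fm)
  have "(\<integral>\<^sup>+x. F (SS x j) (sub j x) \<partial>PP) = (\<integral>\<^sup>+x. \<integral>\<^sup>+y. F (SS x j) (sub j y) \<partial>PP \<partial>PP)"
  proof (rule T2[where H="\<lambda>x y. F (SS x j) (sub j y)"])
    show "?K1 \<inter> ?K2 = {}" by auto
    have "(\<lambda>(x,y). (SS x j, sub j y)) \<in> measurable (PP \<Otimes>\<^sub>M PP) (borel \<Otimes>\<^sub>M PP)"
      by measurable
    from measurable_comp[OF this Fm] show "(\<lambda>(x,y). F (SS x j) (sub j y)) \<in> borel_measurable (PP \<Otimes>\<^sub>M PP)"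
      by (simp add: o_def split_beta)
    fix x y :: tr
    have "SS (restrict x ?K1) j = SS x j" by (simp add: SS_def)
    moreover have "sub j (restrict y ?K2) = sub j y" by (auto simp: sub_def fun_eq_iff)
    ultimately show "F (SS x j) (sub j y) = F (SS (restrict x ?K1) j) (sub j (restrict y ?K2))" by simp
  qed
  also have "\<dots> = (\<integral>\<^sup>+x. (\<lambda>r. \<integral>\<^sup>+y. F r y \<partial>PP) (SS x j) \<partial>PP)"
    by (intro nn_integral_cong nn_integral_sub measurable_slice_PP[OF Fm])
  also have "\<dots> = (\<integral>\<^sup>+r. erlang_density (j-1) 1 r * (\<integral>\<^sup>+y. F r y \<partial>PP) \<partial>lborel)"
    by (rule distributed_nn_integral[symmetric, OF SS_distributed[OF j]]) simp
  finally show ?thesis .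
qed

lemma C1:
  fixes F :: "real \<Rightarrow> tr \<Rightarrow> ennreal"
  assumes Fm[measurable]: "(\<lambda>(r,y). F r y) \<in> borel_measurable (borel \<Otimes>\<^sub>M PP)"
  shows "(\<integral>\<^sup>+x. (\<Sum>i. F (SS x (Suc i)) (sub (Suc i) x)) \<partial>PP) = (\<integral>\<^sup>+r. indicator {0..} r * (\<integral>\<^sup>+y. F r y \<partial>PP) \<partial>lborel)"
proof -
  have fm[measurable]: "(\<lambda>r. \<integral>\<^sup>+y. F r y \<partial>PP) \<in> borel_measurable borel"
    by (rule PP.borel_measurable_nn_integral) (simp add: Fm)
  have m: "(\<lambda>x. F (SS x (Suc i)) (sub (Suc i) x)) \<in> borel_measurable PP" for i
  proof -
    have "(\<lambda>x. (SS x (Suc i), sub (Suc i) x)) \<in> measurable PP (borel \<Otimes>\<^sub>M PP)"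
      by measurable
    from measurable_comp[OF this Fm] show ?thesis by (simp add: o_def)
  qed
  have "(\<integral>\<^sup>+x. (\<Sum>i. F (SS x (Suc i)) (sub (Suc i) x)) \<partial>PP) = (\<Sum>i. \<integral>\<^sup>+x. F (SS x (Suc i)) (sub (Suc i) x) \<partial>PP)"
    by (rule nn_integral_suminf[OF m])
  also have "\<dots> = (\<Sum>i. \<integral>\<^sup>+r. erlang_density i 1 r * (\<integral>\<^sup>+y. F r y \<partial>PP) \<partial>lborel)"
    using term1[OF _ Fm] by simp
  also have "\<dots> = (\<integral>\<^sup>+r. (\<Sum>i. erlang_density i 1 r * (\<integral>\<^sup>+y. F r y \<partial>PP)) \<partial>lborel)"
    by (rule nn_integral_suminf[symmetric]) simp
  also have "\<dots> = (\<integral>\<^sup>+r. indicator {0..} r * (\<integral>\<^sup>+y. F r y \<partial>PP) \<partial>lborel)"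
    by (simp add: erlang_sum1)
  finally show ?thesis .
qed


lemma T2':
  fixes H :: "tr \<Rightarrow> tr \<Rightarrow> ennreal"
  assumes disj: "KA \<inter> KB = {}"
    and Hm: "(\<lambda>(x,y). H x y) \<in> borel_measurable (PP \<Otimes>\<^sub>M PP)"
    and Hr: "\<And>x y. H x y = H (restrict x KA) (restrict y KB)"
    and G: "\<And>x. (\<integral>\<^sup>+y. H x y \<partial>PP) = G x"
  shows "(\<integral>\<^sup>+x. H x x \<partial>PP) = (\<integral>\<^sup>+x. G x \<partial>PP)"
  using T2[OF disj Hm Hr] G by simp

lemma term2:
  fixes F G :: "real \<Rightarrow> tr \<Rightarrow> ennreal"
  assumes j: "1 \<le> j" "j < j'"
    and Fm[measurable]: "(\<lambda>(r,y). F r y) \<in> borel_measurable (borel \<Otimes>\<^sub>M PP)"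
    and Gm[measurable]: "(\<lambda>(r,y). G r y) \<in> borel_measurable (borel \<Otimes>\<^sub>M PP)"
  shows "(\<integral>\<^sup>+x. F (SS x j) (sub j x) * G (SS x j') (sub j' x) \<partial>PP) =
    (\<integral>\<^sup>+a. erlang_density (j-1) 1 a * (\<integral>\<^sup>+y. F a y \<partial>PP) *
       (\<integral>\<^sup>+b. erlang_density (j'-j-1) 1 b * (\<integral>\<^sup>+y. G (a + b) y \<partial>PP) \<partial>lborel) \<partial>lborel)"
proof -
  define f where "f r = (\<integral>\<^sup>+y. F r y \<partial>PP)" for r
  define g where "g r = (\<integral>\<^sup>+y. G r y \<partial>PP)" for r
  have fm[measurable]: "f \<in> borel_measurable borel"
    unfolding f_def by (rule PP.borel_measurable_nn_integral) (simp add: Fm)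
  have gm[measurable]: "g \<in> borel_measurable borel"
    unfolding g_def by (rule PP.borel_measurable_nn_integral) (simp add: Gm)
  have mF: "(\<lambda>(x,y). F (SS x j) (sub j x)) \<in> borel_measurable (PP \<Otimes>\<^sub>M PP)"
  proof -
    have "(\<lambda>(x,y). (SS x j, sub j x)) \<in> measurable (PP \<Otimes>\<^sub>M PP) (borel \<Otimes>\<^sub>M PP)" by measurable
    from measurable_comp[OF this Fm] show ?thesis by (simp add: o_def split_beta)
  qed
  have mF2: "(\<lambda>(x,y). F (SS x j) (sub j y)) \<in> borel_measurable (PP \<Otimes>\<^sub>M PP)"
  proof -
    have "(\<lambda>(x,y). (SS x j, sub j y)) \<in> measurable (PP \<Otimes>\<^sub>M PP) (borel \<Otimes>\<^sub>M PP)" by measurable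
    from measurable_comp[OF this Fm] show ?thesis by (simp add: o_def split_beta)
  qed
  have mG: "(\<lambda>(x,y). G (SS x j') (sub j' y)) \<in> borel_measurable (PP \<Otimes>\<^sub>M PP)"
  proof -
    have "(\<lambda>(x,y). (SS x j', sub j' y)) \<in> measurable (PP \<Otimes>\<^sub>M PP) (borel \<Otimes>\<^sub>M PP)" by measurable
    from measurable_comp[OF this Gm] show ?thesis by (simp add: o_def split_beta)
  qed
  have s1: "(\<integral>\<^sup>+x. F (SS x j) (sub j x) * G (SS x j') (sub j' x) \<partial>PP) = (\<integral>\<^sup>+x. F (SS x j) (sub j x) * g (SS x j') \<partial>PP)"
  proof (rule T2'[where KA="{([],l) |l. True} \<union> {(j#v, l) |v l. True}" and KB="{(j'#v, l) |v l. True}"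
    and H="\<lambda>x y. F (SS x j) (sub j x) * G (SS x j') (sub j' y)" and G="\<lambda>x. F (SS x j) (sub j x) * g (SS x j')"])
    show "({([],l) |l. True} \<union> {(j#v, l) |v l. True}) \<inter> {(j'#v, l) |v l. True} = {}" using j by auto
    show "(\<lambda>(x,y). F (SS x j) (sub j x) * G (SS x j') (sub j' y)) \<in> borel_measurable (PP \<Otimes>\<^sub>M PP)"
      using mF mG by (simp add: split_beta)
    fix x y :: tr
    let ?x = "restrict x ({([],l) |l. True} \<union> {(j#v, l) |v l. True})"
    let ?y = "restrict y {(j'#v, l) |v l. True}"
    have "SS ?x j = SS x j" "SS ?x j' = SS x j'" by (simp_all add: SS_def)
    moreover have "sub j ?x = sub j x" "sub j' ?y = sub j' y" by (auto simp: sub_def fun_eq_iff)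
    ultimately show "F (SS x j) (sub j x) * G (SS x j') (sub j' y) = F (SS ?x j) (sub j ?x) * G (SS ?x j') (sub j' ?y)"
      by simp
    have "(\<integral>\<^sup>+y. F (SS x j) (sub j x) * G (SS x j') (sub j' y) \<partial>PP) = F (SS x j) (sub j x) * (\<integral>\<^sup>+y. G (SS x j') (sub j' y) \<partial>PP)"
      by (rule nn_integral_cmult) (use measurable_comp[OF measurable_sub measurable_slice_PP[OF Gm, of "SS x j'"]] in \<open>simp add: o_def\<close>)
    also have "\<dots> = F (SS x j) (sub j x) * g (SS x j')"
      unfolding g_def by (subst nn_integral_sub) (auto intro: measurable_slice_PP[OF Gm])
    finally show "(\<integral>\<^sup>+y. F (SS x j) (sub j x) * G (SS x j') (sub j' y) \<partial>PP) = F (SS x j) (sub j x) * g (SS x j')" .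
  qed
  have s2: "(\<integral>\<^sup>+x. F (SS x j) (sub j x) * g (SS x j') \<partial>PP) = (\<integral>\<^sup>+x. f (SS x j) * g (SS x j') \<partial>PP)"
  proof (rule T2'[where KA="{([],l) |l. True}" and KB="{(j#v, l) |v l. True}"
    and H="\<lambda>x y. F (SS x j) (sub j y) * g (SS x j')" and G="\<lambda>x. f (SS x j) * g (SS x j')"])
    show "{([],l) |l. True} \<inter> {(j#v, l) |v l. True} = {}" by auto
    show "(\<lambda>(x,y). F (SS x j) (sub j y) * g (SS x j')) \<in> borel_measurable (PP \<Otimes>\<^sub>M PP)"
      using mF2 by (simp add: split_beta)
    fix x y :: tr
    let ?x = "restrict x {([],l) |l. True}"
    let ?y = "restrict y {(j#v, l) |v l. True}"
    have "SS ?x j = SS x j" "SS ?x j' = SS x j'" by (simp_all add: SS_def)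
    moreover have "sub j ?y = sub j y" by (auto simp: sub_def fun_eq_iff)
    ultimately show "F (SS x j) (sub j y) * g (SS x j') = F (SS ?x j) (sub j ?y) * g (SS ?x j')"
      by simp
    have "(\<integral>\<^sup>+y. F (SS x j) (sub j y) * g (SS x j') \<partial>PP) = (\<integral>\<^sup>+y. F (SS x j) (sub j y) \<partial>PP) * g (SS x j')"
      by (rule nn_integral_multc) (use measurable_comp[OF measurable_sub measurable_slice_PP[OF Fm, of "SS x j"]] in \<open>simp add: o_def\<close>)
    also have "\<dots> = f (SS x j) * g (SS x j')"
      unfolding f_def by (subst nn_integral_sub) (auto intro: measurable_slice_PP[OF Fm])
    finally show "(\<integral>\<^sup>+y. F (SS x j) (sub j y) * g (SS x j') \<partial>PP) = f (SS x j) * g (SS x j')" .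
  qed
  define D where "D y = (\<Sum>l\<in>{j..<j'}. y ([], l))" for y :: tr
  have Dm[measurable]: "D \<in> borel_measurable PP" unfolding D_def by measurable
  have SSD: "SS x j' = SS x j + D x" for x
  proof -
    have "{..<j'} = {..<j} \<union> {j..<j'}" using j by auto
    moreover have "(\<Sum>l\<in>{..<j} \<union> {j..<j'}. x ([], l)) = (\<Sum>l<j. x ([], l)) + (\<Sum>l\<in>{j..<j'}. x ([], l))"
      by (rule sum.union_disjoint) auto
    ultimately show ?thesis unfolding SS_def D_def by simp
  qed
  have Ddist: "distributed PP lborel D (erlang_density (j'-j-1) 1)"
  proof -
    have "{j..<j'} \<noteq> {}" using j by auto
    have "D = (\<lambda>x. \<Sum>l\<in>{j..<j'}. x ([], l))" by (simp add: D_def fun_eq_iff)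
    with erlang_block[OF _ \<open>{j..<j'} \<noteq> {}\<close>] show ?thesis by simp
  qed
  have s3: "(\<integral>\<^sup>+x. f (SS x j) * g (SS x j') \<partial>PP) =
      (\<integral>\<^sup>+x. f (SS x j) * (\<integral>\<^sup>+b. erlang_density (j'-j-1) 1 b * g (SS x j + b) \<partial>lborel) \<partial>PP)"
  proof (rule trans[OF _ T2'[where KA="{([],l) |l. l < j}" and KB="{([],l) |l. j \<le> l \<and> l < j'}"
    and H="\<lambda>x y. f (SS x j) * g (SS x j + D y)" and G="\<lambda>x. f (SS x j) * (\<integral>\<^sup>+b. erlang_density (j'-j-1) 1 b * g (SS x j + b) \<partial>lborel)"]])
    show "(\<integral>\<^sup>+x. f (SS x j) * g (SS x j') \<partial>PP) = (\<integral>\<^sup>+x. f (SS x j) * g (SS x j + D x) \<partial>PP)"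
      by (simp add: SSD)
    show "{([],l) |l. l < j} \<inter> {([],l) |l. j \<le> l \<and> l < j'} = {}" by auto
    show "(\<lambda>(x,y). f (SS x j) * g (SS x j + D y)) \<in> borel_measurable (PP \<Otimes>\<^sub>M PP)"
      by measurable
    fix x y :: tr
    let ?x = "restrict x {([],l) |l. l < j}"
    let ?y = "restrict y {([],l) |l. j \<le> l \<and> l < j'}"
    have "SS ?x j = SS x j" by (simp add: SS_def)
    moreover have "D ?y = D y" by (simp add: D_def)
    ultimately show "f (SS x j) * g (SS x j + D y) = f (SS ?x j) * g (SS ?x j + D ?y)" by simp
    have "(\<integral>\<^sup>+y. f (SS x j) * g (SS x j + D y) \<partial>PP) = f (SS x j) * (\<integral>\<^sup>+y. g (SS x j + D y) \<partial>PP)"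
      by (rule nn_integral_cmult) measurable
    also have "(\<integral>\<^sup>+y. g (SS x j + D y) \<partial>PP) = (\<integral>\<^sup>+b. erlang_density (j'-j-1) 1 b * g (SS x j + b) \<partial>lborel)"
      by (rule distributed_nn_integral[symmetric, OF Ddist]) simp
    finally show "(\<integral>\<^sup>+y. f (SS x j) * g (SS x j + D y) \<partial>PP) = f (SS x j) * (\<integral>\<^sup>+b. erlang_density (j'-j-1) 1 b * g (SS x j + b) \<partial>lborel)" .
  qed
  have s4: "(\<integral>\<^sup>+x. f (SS x j) * (\<integral>\<^sup>+b. erlang_density (j'-j-1) 1 b * g (SS x j + b) \<partial>lborel) \<partial>PP) =
     (\<integral>\<^sup>+a. erlang_density (j-1) 1 a * (f a * (\<integral>\<^sup>+b. erlang_density (j'-j-1) 1 b * g (a + b) \<partial>lborel)) \<partial>lborel)"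
    by (rule distributed_nn_integral[symmetric, OF SS_distributed[OF j(1)]]) measurable
  show ?thesis
    using s1 s2 s3 s4 by (simp add: f_def g_def mult.assoc)
qed

lemma erl_sums: "(\<lambda>n. erlang_density n 1 r) sums (indicator {0..} r :: real)"
proof (cases "r < 0")
  case True then show ?thesis by (simp add: erlang_density_def)
next
  case False
  have "(\<lambda>n. r^n /\<^sub>R fact n) sums exp r" by (rule exp_converges)
  then have "(\<lambda>n. r^n / fact n) sums exp r" by (simp add: divide_inverse_commute scaleR_conv_of_real)
  then have "(\<lambda>n. r^n / fact n * exp (-r)) sums (exp r * exp (-r))" by (rule sums_mult2)
  then show ?thesis
    using False by (simp add: erlang_density_def exp_minus field_simps)
qed

lemma erl_nonneg: "0 \<le> erlang_density n 1 r"
  by simp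

lemma erl_shift_sums: "(\<lambda>i'. if i < i' then erlang_density (i'-i-1) 1 r else 0) sums (indicator {0..} r :: real)"
proof -
  have "(\<lambda>n. (\<lambda>i'. if i < i' then erlang_density (i'-i-1) 1 r else 0) (n + Suc i)) sums (indicator {0..} r :: real)"
    using erl_sums by simp
  then show ?thesis
    by (subst (asm) sums_iff_shift) simp
qed

lemma erl_cauchy_sums:
  "(\<lambda>i. \<Sum>i'<i. erlang_density i' 1 a * erlang_density (i-i'-1) 1 b) sums (indicator {0..} a * indicator {0..} b :: real)"
proof -
  let ?A = "\<lambda>n. erlang_density n 1 a" and ?B = "\<lambda>n. erlang_density n 1 b"
  have sa: "summable (\<lambda>k. norm (?A k))" using erl_sums[of a] by (simp add: sums_iff)
  have sb: "summable (\<lambda>k. norm (?B k))" using erl_sums[of b] by (simp add: sums_iff)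
  have "(\<lambda>k. \<Sum>i\<le>k. ?A i * ?B (k - i)) sums ((\<Sum>k. ?A k) * (\<Sum>k. ?B k))"
    by (rule Cauchy_product_sums[OF sa sb])
  moreover have "(\<Sum>k. ?A k) = indicator {0..} a" "(\<Sum>k. ?B k) = indicator {0..} b"
    using erl_sums[of a] erl_sums[of b] by (simp_all add: sums_iff)
  ultimately have *: "(\<lambda>k. \<Sum>i\<le>k. ?A i * ?B (k - i)) sums (indicator {0..} a * indicator {0..} b :: real)" by simp
  have "(\<lambda>n. (\<lambda>i. \<Sum>i'<i. ?A i' * ?B (i-i'-1)) (n + 1)) = (\<lambda>k. \<Sum>i\<le>k. ?A i * ?B (k - i))"
    by (auto simp: lessThan_Suc_atMost fun_eq_iff intro!: sum.cong)
  with * have "(\<lambda>n. (\<lambda>i. \<Sum>i'<i. ?A i' * ?B (i-i'-1)) (n + 1)) sums (indicator {0..} a * indicator {0..} b :: real)"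
    by simp
  then show ?thesis by (subst (asm) sums_iff_shift) simp
qed

lemma pull_suminf2:
  fixes c :: "nat \<Rightarrow> real \<Rightarrow> real \<Rightarrow> ennreal" and \<Phi> :: "real \<Rightarrow> real \<Rightarrow> ennreal"
  assumes [measurable]: "\<And>n. (\<lambda>(a,b). c n a b) \<in> borel_measurable (borel \<Otimes>\<^sub>M borel)"
    and [measurable]: "(\<lambda>(a,b). \<Phi> a b) \<in> borel_measurable (borel \<Otimes>\<^sub>M borel)"
  shows "(\<Sum>n. \<integral>\<^sup>+a. \<integral>\<^sup>+b. c n a b * \<Phi> a b \<partial>lborel \<partial>lborel) = (\<integral>\<^sup>+a. \<integral>\<^sup>+b. (\<Sum>n. c n a b) * \<Phi> a b \<partial>lborel \<partial>lborel)"
proof -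
  have "(\<Sum>n. \<integral>\<^sup>+a. \<integral>\<^sup>+b. c n a b * \<Phi> a b \<partial>lborel \<partial>lborel) = (\<integral>\<^sup>+a. (\<Sum>n. \<integral>\<^sup>+b. c n a b * \<Phi> a b \<partial>lborel) \<partial>lborel)"
    by (rule nn_integral_suminf[symmetric]) measurable
  also have "\<dots> = (\<integral>\<^sup>+a. \<integral>\<^sup>+b. (\<Sum>n. c n a b * \<Phi> a b) \<partial>lborel \<partial>lborel)"
    by (intro nn_integral_cong nn_integral_suminf[symmetric]) measurable
  finally show ?thesis by simp
qed

lemma pull_sum2:
  fixes c :: "nat \<Rightarrow> real \<Rightarrow> real \<Rightarrow> ennreal" and \<Phi> :: "real \<Rightarrow> real \<Rightarrow> ennreal"
  assumes [measurable]: "\<And>n. (\<lambda>(a,b). c n a b) \<in> borel_measurable (borel \<Otimes>\<^sub>M borel)"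
    and [measurable]: "(\<lambda>(a,b). \<Phi> a b) \<in> borel_measurable (borel \<Otimes>\<^sub>M borel)"
  shows "(\<Sum>n\<in>N. \<integral>\<^sup>+a. \<integral>\<^sup>+b. c n a b * \<Phi> a b \<partial>lborel \<partial>lborel) = (\<integral>\<^sup>+a. \<integral>\<^sup>+b. (\<Sum>n\<in>N. c n a b) * \<Phi> a b \<partial>lborel \<partial>lborel)"
proof -
  have "(\<Sum>n\<in>N. \<integral>\<^sup>+a. \<integral>\<^sup>+b. c n a b * \<Phi> a b \<partial>lborel \<partial>lborel) = (\<integral>\<^sup>+a. (\<Sum>n\<in>N. \<integral>\<^sup>+b. c n a b * \<Phi> a b \<partial>lborel) \<partial>lborel)"
    by (rule nn_integral_sum[symmetric]) measurable
  also have "\<dots> = (\<integral>\<^sup>+a. \<integral>\<^sup>+b. (\<Sum>n\<in>N. c n a b * \<Phi> a b) \<partial>lborel \<partial>lborel)"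
    by (intro nn_integral_cong nn_integral_sum[symmetric]) measurable
  finally show ?thesis by (simp add: sum_distrib_right)
qed

lemma term2':
  fixes F G :: "real \<Rightarrow> tr \<Rightarrow> ennreal"
  assumes j: "1 \<le> j" "j < j'"
    and Fm[measurable]: "(\<lambda>(r,y). F r y) \<in> borel_measurable (borel \<Otimes>\<^sub>M PP)"
    and Gm[measurable]: "(\<lambda>(r,y). G r y) \<in> borel_measurable (borel \<Otimes>\<^sub>M PP)"
  shows "(\<integral>\<^sup>+x. F (SS x j) (sub j x) * G (SS x j') (sub j' x) \<partial>PP) =
    (\<integral>\<^sup>+a. \<integral>\<^sup>+b. ennreal (erlang_density (j-1) 1 a * erlang_density (j'-j-1) 1 b) *
       ((\<integral>\<^sup>+y. F a y \<partial>PP) * (\<integral>\<^sup>+y. G (a + b) y \<partial>PP)) \<partial>lborel \<partial>lborel)"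
proof -
  define f where "f r = (\<integral>\<^sup>+y. F r y \<partial>PP)" for r
  define g where "g r = (\<integral>\<^sup>+y. G r y \<partial>PP)" for r
  have fm[measurable]: "f \<in> borel_measurable borel"
    unfolding f_def by (rule PP.borel_measurable_nn_integral) (simp add: Fm)
  have gm[measurable]: "g \<in> borel_measurable borel"
    unfolding g_def by (rule PP.borel_measurable_nn_integral) (simp add: Gm)
  have "(\<integral>\<^sup>+x. F (SS x j) (sub j x) * G (SS x j') (sub j' x) \<partial>PP) =
    (\<integral>\<^sup>+a. erlang_density (j-1) 1 a * f a * (\<integral>\<^sup>+b. erlang_density (j'-j-1) 1 b * g (a + b) \<partial>lborel) \<partial>lborel)"
    unfolding f_def g_def by (rule term2[OF j Fm Gm])
  also have "\<dots> = (\<integral>\<^sup>+a. \<integral>\<^sup>+b. ennreal (erlang_density (j-1) 1 a * erlang_density (j'-j-1) 1 b) * (f a * g (a + b)) \<partial>lborel \<partial>lborel)"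
  proof (intro nn_integral_cong)
    fix a
    have "ennreal (erlang_density (j-1) 1 a) * f a * (\<integral>\<^sup>+b. erlang_density (j'-j-1) 1 b * g (a + b) \<partial>lborel)
       = (\<integral>\<^sup>+b. (ennreal (erlang_density (j-1) 1 a) * f a) * (erlang_density (j'-j-1) 1 b * g (a + b)) \<partial>lborel)"
      by (rule nn_integral_cmult[symmetric]) measurable
    also have "\<dots> = (\<integral>\<^sup>+b. ennreal (erlang_density (j-1) 1 a * erlang_density (j'-j-1) 1 b) * (f a * g (a + b)) \<partial>lborel)"
      by (intro nn_integral_cong) (simp add: ennreal_mult ac_simps)
    finally show "ennreal (erlang_density (j-1) 1 a) * f a * (\<integral>\<^sup>+b. erlang_density (j'-j-1) 1 b * g (a + b) \<partial>lborel)
       = (\<integral>\<^sup>+b. ennreal (erlang_density (j-1) 1 a * erlang_density (j'-j-1) 1 b) * (f a * g (a + b)) \<partial>lborel)" .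
  qed
  finally show ?thesis unfolding f_def g_def .
qed

lemma C2:
  fixes F G :: "real \<Rightarrow> tr \<Rightarrow> ennreal"
  assumes Fm[measurable]: "(\<lambda>(r,y). F r y) \<in> borel_measurable (borel \<Otimes>\<^sub>M PP)"
    and Gm[measurable]: "(\<lambda>(r,y). G r y) \<in> borel_measurable (borel \<Otimes>\<^sub>M PP)"
  defines "f \<equiv> \<lambda>r. (\<integral>\<^sup>+y. F r y \<partial>PP)" and "g \<equiv> \<lambda>r. (\<integral>\<^sup>+y. G r y \<partial>PP)"
  shows "(\<integral>\<^sup>+x. (\<Sum>i. \<Sum>i'. if i = i' then 0 else F (SS x (Suc i)) (sub (Suc i) x) * G (SS x (Suc i')) (sub (Suc i') x)) \<partial>PP) =
    (\<integral>\<^sup>+a. \<integral>\<^sup>+b. ennreal (indicator {0..} a * indicator {0..} b) * (f a * g (a + b)) \<partial>lborel \<partial>lborel) +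
    (\<integral>\<^sup>+a. \<integral>\<^sup>+b. ennreal (indicator {0..} a * indicator {0..} b) * (g a * f (a + b)) \<partial>lborel \<partial>lborel)"
proof -
  have fm[measurable]: "f \<in> borel_measurable borel"
    unfolding f_def by (rule PP.borel_measurable_nn_integral) (simp add: Fm)
  have gm[measurable]: "g \<in> borel_measurable borel"
    unfolding g_def by (rule PP.borel_measurable_nn_integral) (simp add: Gm)
  define a where "a i x = F (SS x (Suc i)) (sub (Suc i) x)" for i x
  define b where "b i x = G (SS x (Suc i)) (sub (Suc i) x)" for i x
  have am[measurable]: "a i \<in> borel_measurable PP" for i
  proof -
    have "(\<lambda>x. (SS x (Suc i), sub (Suc i) x)) \<in> measurable PP (borel \<Otimes>\<^sub>M PP)" by measurable
    moreover have "a i = (\<lambda>x. (\<lambda>(r,y). F r y) (SS x (Suc i), sub (Suc i) x))" by (simp add: fun_eq_iff a_def)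
    ultimately show ?thesis using measurable_comp[OF _ Fm] by (simp add: o_def)
  qed
  have bm[measurable]: "b i \<in> borel_measurable PP" for i
  proof -
    have "(\<lambda>x. (SS x (Suc i), sub (Suc i) x)) \<in> measurable PP (borel \<Otimes>\<^sub>M PP)" by measurable
    moreover have "b i = (\<lambda>x. (\<lambda>(r,y). G r y) (SS x (Suc i), sub (Suc i) x))" by (simp add: fun_eq_iff b_def)
    ultimately show ?thesis using measurable_comp[OF _ Gm] by (simp add: o_def)
  qed
  have split: "(\<Sum>i'. if i = i' then 0 else a i x * b i' x) = (\<Sum>i'. if i < i' then a i x * b i' x else 0) + (\<Sum>i'<i. a i x * b i' x)" for i x
  proof -
    have "(\<Sum>i'. if i = i' then 0 else a i x * b i' x) = (\<Sum>i'. (if i < i' then a i x * b i' x else 0) + (if i' < i then a i x * b i' x else 0))"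
      by (intro suminf_cong) auto
    also have "\<dots> = (\<Sum>i'. if i < i' then a i x * b i' x else 0) + (\<Sum>i'. if i' < i then a i x * b i' x else 0)"
      by (rule suminf_add[symmetric]) auto
    also have "(\<Sum>i'. if i' < i then a i x * b i' x else 0) = (\<Sum>i'<i. a i x * b i' x)"
      by (subst suminf_finite[of "{..<i}"]) auto
    finally show ?thesis .
  qed
  define \<Phi>1 where "\<Phi>1 al be = f al * g (al + be)" for al be
  define \<Phi>2 where "\<Phi>2 al be = g al * f (al + be)" for al be
  have [measurable]: "(\<lambda>(al, be). \<Phi>1 al be) \<in> borel_measurable (borel \<Otimes>\<^sub>M borel)" unfolding \<Phi>1_def by measurable
  have [measurable]: "(\<lambda>(al, be). \<Phi>2 al be) \<in> borel_measurable (borel \<Otimes>\<^sub>M borel)" unfolding \<Phi>2_def by measurable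
  define e1 where "e1 i i' al be = ennreal (if i < i' then erlang_density i 1 al * erlang_density (i'-i-1) 1 be else 0)" for i i' al be
  have e1m[measurable]: "(\<lambda>(al, be). e1 i i' al be) \<in> borel_measurable (borel \<Otimes>\<^sub>M borel)" for i i'
    unfolding e1_def by measurable
  have ta: "(\<integral>\<^sup>+x. (if i < i' then a i x * b i' x else 0) \<partial>PP) = (\<integral>\<^sup>+al. \<integral>\<^sup>+be. e1 i i' al be * \<Phi>1 al be \<partial>lborel \<partial>lborel)" for i i'
  proof (cases "i < i'")
    case True
    then show ?thesis
      using term2'[OF _ _ Fm Gm, of "Suc i" "Suc i'"] by (simp add: a_def b_def e1_def \<Phi>1_def f_def g_def)
  qed (simp add: e1_def)
  have e1sum: "(\<Sum>i. \<Sum>i'. e1 i i' al be) = ennreal (indicator {0..} al * indicator {0..} be)" for al be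
  proof -
    have "(\<Sum>i'. e1 i i' al be) = ennreal (erlang_density i 1 al * indicator {0..} be)" for i
    proof -
      have "(\<lambda>i'. erlang_density i 1 al * (if i < i' then erlang_density (i'-i-1) 1 be else 0)) sums (erlang_density i 1 al * indicator {0..} be)"
        by (rule sums_mult[OF erl_shift_sums])
      then show ?thesis unfolding e1_def
        by (intro suminf_ennreal_eq) (auto simp: if_distrib cong: if_cong)
    qed
    then have "(\<Sum>i. \<Sum>i'. e1 i i' al be) = (\<Sum>i. ennreal (erlang_density i 1 al * indicator {0..} be))" by simp
    also have "\<dots> = ennreal (indicator {0..} al * indicator {0..} be)"
      by (intro suminf_ennreal_eq sums_mult2[OF erl_sums]) auto
    finally show ?thesis .
  qed
  have pa: "(\<integral>\<^sup>+x. (\<Sum>i. \<Sum>i'. if i < i' then a i x * b i' x else 0) \<partial>PP) =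
      (\<integral>\<^sup>+al. \<integral>\<^sup>+be. ennreal (indicator {0..} al * indicator {0..} be) * \<Phi>1 al be \<partial>lborel \<partial>lborel)"
  proof -
    have "(\<integral>\<^sup>+x. (\<Sum>i. \<Sum>i'. if i < i' then a i x * b i' x else 0) \<partial>PP) = (\<Sum>i. \<integral>\<^sup>+x. (\<Sum>i'. if i < i' then a i x * b i' x else 0) \<partial>PP)"
      by (rule nn_integral_suminf) measurable
    also have "\<dots> = (\<Sum>i. \<Sum>i'. \<integral>\<^sup>+x. (if i < i' then a i x * b i' x else 0) \<partial>PP)"
      by (intro suminf_cong nn_integral_suminf) measurable
    also have "\<dots> = (\<Sum>i. \<Sum>i'. \<integral>\<^sup>+al. \<integral>\<^sup>+be. e1 i i' al be * \<Phi>1 al be \<partial>lborel \<partial>lborel)"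
      by (simp add: ta)
    also have "\<dots> = (\<Sum>i. \<integral>\<^sup>+al. \<integral>\<^sup>+be. (\<Sum>i'. e1 i i' al be) * \<Phi>1 al be \<partial>lborel \<partial>lborel)"
      by (intro suminf_cong pull_suminf2) measurable
    also have "\<dots> = (\<integral>\<^sup>+al. \<integral>\<^sup>+be. (\<Sum>i. \<Sum>i'. e1 i i' al be) * \<Phi>1 al be \<partial>lborel \<partial>lborel)"
      by (rule pull_suminf2) measurable
    finally show ?thesis by (simp add: e1sum)
  qed
  define e2 where "e2 i i' al be = ennreal (erlang_density i' 1 al * erlang_density (i-i'-1) 1 be)" for i i' al be
  have e2m[measurable]: "(\<lambda>(al, be). e2 i i' al be) \<in> borel_measurable (borel \<Otimes>\<^sub>M borel)" for i i'
    unfolding e2_def by measurable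
  have tb: "(\<integral>\<^sup>+x. a i x * b i' x \<partial>PP) = (\<integral>\<^sup>+al. \<integral>\<^sup>+be. e2 i i' al be * \<Phi>2 al be \<partial>lborel \<partial>lborel)" if "i' < i" for i i'
    using term2'[OF _ _ Gm Fm, of "Suc i'" "Suc i"] that by (simp add: a_def b_def e2_def \<Phi>2_def f_def g_def mult.commute)
  have e2sum: "(\<Sum>i. \<Sum>i'<i. e2 i i' al be) = ennreal (indicator {0..} al * indicator {0..} be)" for al be
    unfolding e2_def using erl_cauchy_sums[of al be]
    by (subst sum_ennreal) (auto intro!: suminf_ennreal_eq sum_nonneg)
  have pb: "(\<integral>\<^sup>+x. (\<Sum>i. \<Sum>i'<i. a i x * b i' x) \<partial>PP) =
      (\<integral>\<^sup>+al. \<integral>\<^sup>+be. ennreal (indicator {0..} al * indicator {0..} be) * \<Phi>2 al be \<partial>lborel \<partial>lborel)"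
  proof -
    have "(\<integral>\<^sup>+x. (\<Sum>i. \<Sum>i'<i. a i x * b i' x) \<partial>PP) = (\<Sum>i. \<integral>\<^sup>+x. (\<Sum>i'<i. a i x * b i' x) \<partial>PP)"
      by (rule nn_integral_suminf) measurable
    also have "\<dots> = (\<Sum>i. \<Sum>i'<i. \<integral>\<^sup>+x. a i x * b i' x \<partial>PP)"
      by (intro suminf_cong nn_integral_sum) measurable
    also have "\<dots> = (\<Sum>i. \<Sum>i'<i. \<integral>\<^sup>+al. \<integral>\<^sup>+be. e2 i i' al be * \<Phi>2 al be \<partial>lborel \<partial>lborel)"
      by (intro suminf_cong sum.cong refl tb) simp
    also have "\<dots> = (\<Sum>i. \<integral>\<^sup>+al. \<integral>\<^sup>+be. (\<Sum>i'<i. e2 i i' al be) * \<Phi>2 al be \<partial>lborel \<partial>lborel)"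
      by (intro suminf_cong pull_sum2) measurable
    also have "\<dots> = (\<integral>\<^sup>+al. \<integral>\<^sup>+be. (\<Sum>i. \<Sum>i'<i. e2 i i' al be) * \<Phi>2 al be \<partial>lborel \<partial>lborel)"
      by (rule pull_suminf2) measurable
    finally show ?thesis by (simp add: e2sum)
  qed
  have "(\<integral>\<^sup>+x. (\<Sum>i. \<Sum>i'. if i = i' then 0 else a i x * b i' x) \<partial>PP) =
     (\<integral>\<^sup>+x. (\<Sum>i. \<Sum>i'. if i < i' then a i x * b i' x else 0) + (\<Sum>i. \<Sum>i'<i. a i x * b i' x) \<partial>PP)"
    by (intro nn_integral_cong) (simp add: split suminf_add[symmetric])
  also have "\<dots> = (\<integral>\<^sup>+x. (\<Sum>i. \<Sum>i'. if i < i' then a i x * b i' x else 0) \<partial>PP) + (\<integral>\<^sup>+x. (\<Sum>i. \<Sum>i'<i. a i x * b i' x) \<partial>PP)"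
    by (rule nn_integral_add) measurable
  also have "\<dots> = (\<integral>\<^sup>+al. \<integral>\<^sup>+be. ennreal (indicator {0..} al * indicator {0..} be) * \<Phi>1 al be \<partial>lborel \<partial>lborel) +
     (\<integral>\<^sup>+al. \<integral>\<^sup>+be. ennreal (indicator {0..} al * indicator {0..} be) * \<Phi>2 al be \<partial>lborel \<partial>lborel)"
    by (simp only: pa pb)
  finally show ?thesis unfolding a_def b_def \<Phi>1_def \<Phi>2_def .
qed


fun Yn :: "nat \<Rightarrow> tr \<Rightarrow> real \<Rightarrow> ennreal" where
  "Yn 0 x s = indicator {0..} s"
| "Yn (Suc m) x s = (\<Sum>i. indicator {..s} (SS x (Suc i)) * Yn m (sub (Suc i) x) (s - SS x (Suc i)))"

lemma Yn_measurable: "(\<lambda>(s,x). Yn m x s) \<in> borel_measurable (borel \<Otimes>\<^sub>M PP)"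
proof (induction m)
  case 0
  then show ?case by simp
next
  case (Suc m)
  have t: "(\<lambda>(s,x). indicator {..s} (SS x (Suc i)) * Yn m (sub (Suc i) x) (s - SS x (Suc i))) \<in> borel_measurable (borel \<Otimes>\<^sub>M PP)" for i
  proof -
    have "(\<lambda>(s,x). (s - SS x (Suc i), sub (Suc i) x)) \<in> measurable (borel \<Otimes>\<^sub>M PP) (borel \<Otimes>\<^sub>M PP)"
      by measurable
    from measurable_comp[OF this Suc.IH] have y: "(\<lambda>(s,x). Yn m (sub (Suc i) x) (s - SS x (Suc i))) \<in> borel_measurable (borel \<Otimes>\<^sub>M PP)"
      by (simp add: o_def split_beta)
    have "(\<lambda>p. indicator {p. SS (snd p) (Suc i) \<le> fst p} p :: ennreal) \<in> borel_measurable (borel \<Otimes>\<^sub>M PP)"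
      by measurable
    moreover have "(\<lambda>p. indicator {p. SS (snd p) (Suc i) \<le> fst p} p :: ennreal) = (\<lambda>(s,x). indicator {..s} (SS x (Suc i)))"
      by (auto simp: fun_eq_iff indicator_def)
    ultimately have ind: "(\<lambda>(s,x). indicator {..s} (SS x (Suc i)) :: ennreal) \<in> borel_measurable (borel \<Otimes>\<^sub>M PP)"
      by simp
    show ?thesis using borel_measurable_times_ennreal[OF ind y] by (simp add: split_beta)
  qed
  have "(\<lambda>p. \<Sum>i. (\<lambda>(s,x). indicator {..s} (SS x (Suc i)) * Yn m (sub (Suc i) x) (s - SS x (Suc i))) p) \<in> borel_measurable (borel \<Otimes>\<^sub>M PP)"
    by (rule borel_measurable_suminf_order) (rule t)
  then show ?case by (simp add: split_beta)
qed

lemma Yn_measurable_F: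
  "(\<lambda>(r,y). Yn m y (s - r)) \<in> borel_measurable (borel \<Otimes>\<^sub>M PP)"
proof -
  have "(\<lambda>(r,y). (s - r, y)) \<in> measurable (borel \<Otimes>\<^sub>M PP) (borel \<Otimes>\<^sub>M PP)" by measurable
  from measurable_comp[OF this Yn_measurable] show ?thesis by (simp add: o_def split_beta)
qed

lemma Yn_measurable_x[measurable]: "(\<lambda>x. Yn m x s) \<in> borel_measurable PP"
  using measurable_compose_Pair1[of s borel, OF _ Yn_measurable[of m]] by simp

lemma PI:
  assumes "0 \<le> s" "0 \<le> c"
  shows "(\<integral>\<^sup>+r. ennreal (c * (s - r)^n) * indicator {0..s} r \<partial>lborel) = ennreal (c * s^(Suc n) / Suc n)"
proof -
  have "(\<integral>\<^sup>+r. ennreal (c * (s - r)^n) * indicator {0..s} r \<partial>lborel) =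
      ennreal ((\<lambda>r. - c * (s - r)^(Suc n) / Suc n) s - (\<lambda>r. - c * (s - r)^(Suc n) / Suc n) 0)"
  proof (rule nn_integral_FTC_Icc)
    show "(\<lambda>r. c * (s - r)^n) \<in> borel_measurable borel" by measurable
    fix r assume r: "r \<in> {0..s}"
    show "((\<lambda>r. - c * (s - r)^(Suc n) / Suc n) has_real_derivative c * (s - r)^n) (at r)"
    proof -
      have "((\<lambda>r. s - r) has_real_derivative -1) (at r)" by (auto intro!: derivative_eq_intros)
      from DERIV_power_Suc[OF this, of n] have "((\<lambda>r. (s - r)^(Suc n)) has_real_derivative (1 + real n) * (- 1 * (s - r)^n)) (at r)" .
      from DERIV_cmult[OF this, of "- c / Suc n"]
      have A: "((\<lambda>r. - c / Suc n * (s - r)^(Suc n)) has_real_derivative (- c / Suc n) * ((1 + real n) * (- 1 * (s - r)^n))) (at r)" .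
      have B: "(\<lambda>r. - c / Suc n * (s - r)^(Suc n)) = (\<lambda>r. - c * (s - r)^(Suc n) / Suc n)" by (auto simp: fun_eq_iff)
      have C: "(- c / Suc n) * ((1 + real n) * (- 1 * (s - r)^n)) = c * (s - r)^n" by (simp add: field_simps)
      show ?thesis using A unfolding B C .
    qed
    show "0 \<le> c * (s - r)^n" using r assms by auto
  qed (use assms in auto)
  then show ?thesis by simp
qed

definition P :: "nat \<Rightarrow> real \<Rightarrow> real \<Rightarrow> real" where
  "P m s r = indicator {..s} r * (s - r)^m / fact m"

lemma P_nonneg: "0 \<le> P m s r"
  by (auto simp: P_def indicator_def)

lemma EY: "(\<integral>\<^sup>+x. Yn m x s \<partial>PP) = ennreal (indicator {0..} s * s^m / fact m)"
proof (induction m arbitrary: s)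
  case 0
  then show ?case by (simp add: PP.emeasure_space_1 ennreal_indicator)
next
  case (Suc m)
  have Fm: "(\<lambda>(r,y). indicator {..s} r * Yn m y (s - r)) \<in> borel_measurable (borel \<Otimes>\<^sub>M PP)"
    using Yn_measurable_F[of m s] by measurable
  have "(\<integral>\<^sup>+x. Yn (Suc m) x s \<partial>PP) = (\<integral>\<^sup>+r. indicator {0..} r * (\<integral>\<^sup>+y. indicator {..s} r * Yn m y (s - r) \<partial>PP) \<partial>lborel)"
    using C1[OF Fm] by simp
  also have "\<dots> = (\<integral>\<^sup>+r. ennreal (1 / fact m * (s - r)^m) * indicator {0..s} r \<partial>lborel)"
  proof (intro nn_integral_cong)
    fix r
    have "(\<integral>\<^sup>+y. indicator {..s} r * Yn m y (s - r) \<partial>PP) = indicator {..s} r * (\<integral>\<^sup>+y. Yn m y (s - r) \<partial>PP)"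
      by (rule nn_integral_cmult) measurable
    then show "indicator {0..} r * (\<integral>\<^sup>+y. indicator {..s} r * Yn m y (s - r) \<partial>PP) = ennreal (1 / fact m * (s - r)^m) * indicator {0..s} r"
      by (auto simp: Suc.IH indicator_def)
  qed
  also have "\<dots> = ennreal (indicator {0..} s * s^(Suc m) / fact (Suc m))"
  proof (cases "0 \<le> s")
    case True
    then show ?thesis by (subst PI) (auto simp: field_simps)
  next
    case False
    then have "\<And>r. indicator {0..s} r = (0::ennreal)" by (auto simp: indicator_def)
    then show ?thesis using False by simp
  qed
  finally show ?case .
qed

lemma PROD:
  fixes a b :: "nat \<Rightarrow> ennreal"
  shows "(\<Sum>i. a i) * (\<Sum>i. b i) = (\<Sum>i. a i * b i) + (\<Sum>i. \<Sum>i'. if i = i' then 0 else a i * b i')"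
proof -
  have "(\<Sum>i. a i) * (\<Sum>i. b i) = (\<Sum>i. \<Sum>i'. a i * b i')"
    by simp
  also have "\<dots> = (\<Sum>i. a i * b i + (\<Sum>i'. if i = i' then 0 else a i * b i'))"
  proof (intro suminf_cong)
    fix i
    have "(\<Sum>i'. a i * b i') = (\<Sum>i'. (if i' = i then a i * b i' else 0) + (if i = i' then 0 else a i * b i'))"
      by (intro suminf_cong) auto
    also have "\<dots> = (\<Sum>i'. (if i' = i then a i * b i' else 0)) + (\<Sum>i'. if i = i' then 0 else a i * b i')"
      by (rule suminf_add[symmetric]) auto
    also have "(\<Sum>i'. (if i' = i then a i * b i' else 0)) = a i * b i"
      by (subst suminf_finite[of "{i}"]) auto
    finally show "(\<Sum>i'. a i * b i') = a i * b i + (\<Sum>i'. if i = i' then 0 else a i * b i')" .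
  qed
  also have "\<dots> = (\<Sum>i. a i * b i) + (\<Sum>i. \<Sum>i'. if i = i' then 0 else a i * b i')"
    by (rule suminf_add[symmetric]) auto
  finally show ?thesis .
qed

lemma aux1: "X / fact m * (1 / fact m * Y / real (Suc m)) = (1 / (fact m ^ 2 * real (Suc m))) * (X * (Y::real))"
  by (simp add: power2_eq_square)

lemma aux2: "(1 / (fact m ^ 2 * real (Suc m))) * Z / (2 * real (Suc m)) = Z / (2 * (fact (Suc m))^2 :: real)"
  by (simp add: power2_eq_square field_simps del: of_nat_Suc)

lemma CROSS:
  "(\<integral>\<^sup>+a. \<integral>\<^sup>+b. ennreal (indicator {0..} a * indicator {0..} b) * (ennreal (P m s a) * ennreal (P m s (a + b))) \<partial>lborel \<partial>lborel)
    = ennreal (indicator {0..} s * s^(2*m+2) / (2 * (fact (Suc m))^2))"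
proof -
  define c where "c = 1 / ((fact m :: real) ^ 2 * real (Suc m))"
  have c0: "0 \<le> c" by (simp add: c_def)
  have inner: "(\<integral>\<^sup>+b. ennreal (indicator {0..} a * indicator {0..} b) * (ennreal (P m s a) * ennreal (P m s (a + b))) \<partial>lborel)
      = ennreal (c * (s - a)^(2*m+1)) * indicator {0..s} a" for a
  proof (cases "0 \<le> a \<and> a \<le> s")
    case True
    have "(\<integral>\<^sup>+b. ennreal (indicator {0..} a * indicator {0..} b) * (ennreal (P m s a) * ennreal (P m s (a + b))) \<partial>lborel)
        = (\<integral>\<^sup>+b. ennreal (P m s a) * (ennreal (1 / fact m * (s - a - b)^m) * indicator {0..s-a} b) \<partial>lborel)"
      using True by (intro nn_integral_cong) (auto simp: P_def indicator_def ennreal_mult' diff_diff_eq)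
    also have "\<dots> = ennreal (P m s a) * (\<integral>\<^sup>+b. ennreal (1 / fact m * (s - a - b)^m) * indicator {0..s-a} b \<partial>lborel)"
      by (rule nn_integral_cmult) measurable
    also have "(\<integral>\<^sup>+b. ennreal (1 / fact m * (s - a - b)^m) * indicator {0..s-a} b \<partial>lborel) = ennreal (1 / fact m * (s - a)^(Suc m) / Suc m)"
      using True by (intro PI) auto
    also have "ennreal (P m s a) * ennreal (1 / fact m * (s - a)^(Suc m) / Suc m) = ennreal (c * (s - a)^(2*m+1))"
    proof -
      have p: "P m s a = (s - a)^m / fact m" using True by (simp add: P_def)
      have "ennreal ((s - a)^m / fact m) * ennreal (1 / fact m * (s - a)^(Suc m) / Suc m) = ennreal ((s - a)^m / fact m * (1 / fact m * (s - a)^(Suc m) / Suc m))"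
        by (rule ennreal_mult''[symmetric]) (use True in simp)
      also have "(s - a)^m / fact m * (1 / fact m * (s - a)^(Suc m) / Suc m) = c * ((s - a)^m * (s - a)^(Suc m))"
        unfolding c_def by (rule aux1)
      also have "(s - a)^m * (s - a)^(Suc m) = (s - a)^(2*m+1)"
      proof -
        have "2*m+1 = m + Suc m" by simp
        then show ?thesis by (simp only: power_add)
      qed
      finally show ?thesis unfolding p .
    qed
    finally show ?thesis using True by simp
  next
    case False
    then have z: "\<And>b. ennreal (indicator {0..} a * indicator {0..} b) * (ennreal (P m s a) * ennreal (P m s (a + b))) = 0"
      by (auto simp: P_def indicator_def)
    show ?thesis using False by (simp only: z) (simp add: indicator_def)
  qed
  have "(\<integral>\<^sup>+a. \<integral>\<^sup>+b. ennreal (indicator {0..} a * indicator {0..} b) * (ennreal (P m s a) * ennreal (P m s (a + b))) \<partial>lborel \<partial>lborel)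
     = (\<integral>\<^sup>+a. ennreal (c * (s - a)^(2*m+1)) * indicator {0..s} a \<partial>lborel)"
    by (simp add: inner)
  also have "\<dots> = ennreal (indicator {0..} s * s^(2*m+2) / (2 * (fact (Suc m))^2))"
  proof (cases "0 \<le> s")
    case True
    then have "(\<integral>\<^sup>+a. ennreal (c * (s - a)^(2*m+1)) * indicator {0..s} a \<partial>lborel) = ennreal (c * s^(Suc (2*m+1)) / Suc (2*m+1))"
      using c0 by (intro PI) auto
    also have "c * s^(Suc (2*m+1)) / Suc (2*m+1) = indicator {0..} s * s^(2*m+2) / (2 * (fact (Suc m))^2)"
    proof -
      have e: "s^(Suc (2*m+1)) = s^(2*m+2)" by simp
      have n: "real (Suc (2*m+1)) = 2 * real (Suc m)" by simp
      have i: "indicator {0..} s = (1::real)" using True by simp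
      show ?thesis unfolding e n i c_def aux2 by simp
    qed
    finally show ?thesis .
  next
    case False
    then have "\<And>a. indicator {0..s} a = (0::ennreal)" by (auto simp: indicator_def)
    then show ?thesis using False by simp
  qed
  finally show ?thesis .
qed

definition cc :: "nat \<Rightarrow> nat \<Rightarrow> real" where
  "cc m i = fact (2*(m-i)) / (fact (m-i)^2 * fact (2*m-i))"

definition V :: "nat \<Rightarrow> real \<Rightarrow> real" where
  "V m s = (\<Sum>i\<le>m. cc m i * s^(2*m-i))"

lemma cc_nonneg: "0 \<le> cc m i"
  by (simp add: cc_def)

lemma V_rec: "V (Suc m) s = s^(2*m+2) / fact (Suc m)^2 + (\<Sum>i\<le>m. cc m i * s^(Suc (2*m-i)) / Suc (2*m-i))"
proof -
  have "V (Suc m) s = cc (Suc m) 0 * s^(2 * Suc m) + (\<Sum>i\<le>m. cc (Suc m) (Suc i) * s^(2 * Suc m - Suc i))"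
    unfolding V_def by (subst sum.atMost_Suc_shift) simp
  also have "cc (Suc m) 0 = 1 / fact (Suc m)^2"
    by (simp add: cc_def)
  also have "(\<Sum>i\<le>m. cc (Suc m) (Suc i) * s^(2 * Suc m - Suc i)) = (\<Sum>i\<le>m. cc m i * s^(Suc (2*m-i)) / Suc (2*m-i))"
  proof (intro sum.cong refl)
    fix i assume "i \<in> {..m}"
    then have i: "i \<le> m" by simp
    have e1: "2 * Suc m - Suc i = Suc (2*m - i)" using i by simp
    have e2: "Suc m - Suc i = m - i" by simp
    have cceq: "cc (Suc m) (Suc i) = cc m i / Suc (2*m-i)"
      unfolding cc_def e1 e2 by (simp add: field_simps)
    show "cc (Suc m) (Suc i) * s^(2 * Suc m - Suc i) = cc m i * s^(Suc (2*m-i)) / Suc (2*m-i)"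
    proof -
      have A: "s^(2 * Suc m - Suc i) = s^(Suc (2*m - i))" using e1 by (rule arg_cong)
      show ?thesis by (subst A, subst cceq, rule times_divide_eq_left)
    qed
  qed
  finally show ?thesis by simp
qed


lemma fexp: "(\<integral>\<^sup>+y. indicator {..s} r * Yn m y (s - r) \<partial>PP) = ennreal (P m s r)"
proof -
  have "(\<integral>\<^sup>+y. indicator {..s} r * Yn m y (s - r) \<partial>PP) = indicator {..s} r * (\<integral>\<^sup>+y. Yn m y (s - r) \<partial>PP)"
    by (rule nn_integral_cmult) measurable
  then show ?thesis by (simp add: EY P_def indicator_def)
qed

lemma IV:
  assumes "0 \<le> s"
  shows "(\<integral>\<^sup>+r. ennreal (V m (s - r)) * indicator {0..s} r \<partial>lborel) = ennreal (\<Sum>i\<le>m. cc m i * s^(Suc (2*m-i)) / Suc (2*m-i))"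
proof -
  have pw: "ennreal (V m (s - r)) * indicator {0..s} r = (\<Sum>i\<le>m. ennreal (cc m i * (s - r)^(2*m-i)) * indicator {0..s} r)" for r
  proof (cases "r \<in> {0..s}")
    case True
    then have "ennreal (V m (s - r)) = (\<Sum>i\<le>m. ennreal (cc m i * (s - r)^(2*m-i)))"
      unfolding V_def by (subst sum_ennreal) (auto intro!: mult_nonneg_nonneg cc_nonneg)
    then show ?thesis by (simp add: sum_distrib_right)
  qed simp
  have "(\<integral>\<^sup>+r. ennreal (V m (s - r)) * indicator {0..s} r \<partial>lborel) = (\<Sum>i\<le>m. \<integral>\<^sup>+r. ennreal (cc m i * (s - r)^(2*m-i)) * indicator {0..s} r \<partial>lborel)"
    unfolding pw by (rule nn_integral_sum) measurable
  also have "\<dots> = (\<Sum>i\<le>m. ennreal (cc m i * s^(Suc (2*m-i)) / Suc (2*m-i)))"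
    using assms by (intro sum.cong refl PI cc_nonneg)
  also have "\<dots> = ennreal (\<Sum>i\<le>m. cc m i * s^(Suc (2*m-i)) / Suc (2*m-i))"
    using assms by (intro sum_ennreal) (auto intro!: divide_nonneg_nonneg mult_nonneg_nonneg cc_nonneg)
  finally show ?thesis .
qed

lemma V_nonneg: "0 \<le> s \<Longrightarrow> 0 \<le> V m s"
  unfolding V_def by (auto intro!: sum_nonneg mult_nonneg_nonneg cc_nonneg)

lemma EY2: "(\<integral>\<^sup>+x. (Yn m x s)^2 \<partial>PP) = ennreal (indicator {0..} s * V m s)"
proof (induction m arbitrary: s)
  case 0
  have "\<And>x. (Yn 0 x s)^2 = indicator {0..} s" by (simp add: indicator_def)
  then show ?case by (simp add: PP.emeasure_space_1 ennreal_indicator V_def cc_def)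
next
  case (Suc m)
  define a where "a i x = indicator {..s} (SS x (Suc i)) * Yn m (sub (Suc i) x) (s - SS x (Suc i))" for i x
  define F where "F r y = indicator {..s} r * Yn m y (s - r)" for r y
  have Fm[measurable]: "(\<lambda>(r,y). F r y) \<in> borel_measurable (borel \<Otimes>\<^sub>M PP)"
    unfolding F_def using Yn_measurable_F[of m s] by measurable
  have F2m: "(\<lambda>(r,y). (F r y)^2) \<in> borel_measurable (borel \<Otimes>\<^sub>M PP)"
    using Fm by measurable
  have aF: "a i x = F (SS x (Suc i)) (sub (Suc i) x)" for i x by (simp add: a_def F_def)
  have am[measurable]: "a i \<in> borel_measurable PP" for i
  proof -
    have "(\<lambda>x. (SS x (Suc i), sub (Suc i) x)) \<in> measurable PP (borel \<Otimes>\<^sub>M PP)" by measurable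
    moreover have "a i = (\<lambda>x. (\<lambda>(r,y). F r y) (SS x (Suc i), sub (Suc i) x))" by (simp add: fun_eq_iff aF)
    ultimately show ?thesis using measurable_comp[OF _ Fm] by (simp add: o_def)
  qed
  have sq: "(Yn (Suc m) x s)^2 = (\<Sum>i. (a i x)^2) + (\<Sum>i. \<Sum>i'. if i = i' then 0 else a i x * a i' x)" for x
    using PROD[of "\<lambda>i. a i x" "\<lambda>i. a i x"] by (simp add: power2_eq_square a_def)
  have m1: "(\<lambda>x. \<Sum>i. (a i x)^2) \<in> borel_measurable PP"
    by (rule borel_measurable_suminf_order) measurable
  have m2: "(\<lambda>x. \<Sum>i. \<Sum>i'. if i = i' then 0 else a i x * a i' x) \<in> borel_measurable PP"
    by (intro borel_measurable_suminf_order) measurable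
  have part1: "(\<integral>\<^sup>+x. (\<Sum>i. (a i x)^2) \<partial>PP) = ennreal (\<Sum>i\<le>m. cc m i * s^(Suc (2*m-i)) / Suc (2*m-i)) * indicator {0..} s"
  proof -
    have "(\<integral>\<^sup>+x. (\<Sum>i. (a i x)^2) \<partial>PP) = (\<integral>\<^sup>+r. indicator {0..} r * (\<integral>\<^sup>+y. (F r y)^2 \<partial>PP) \<partial>lborel)"
      using C1[OF F2m] by (simp add: aF)
    also have "\<dots> = (\<integral>\<^sup>+r. ennreal (V m (s - r)) * indicator {0..s} r \<partial>lborel)"
    proof (intro nn_integral_cong)
      fix r
      have "(\<integral>\<^sup>+y. (F r y)^2 \<partial>PP) = indicator {..s} r * (\<integral>\<^sup>+y. (Yn m y (s - r))^2 \<partial>PP)"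
        unfolding F_def power_mult_distrib by (subst nn_integral_cmult[symmetric]) (measurable, simp add: indicator_def)
      then show "indicator {0..} r * (\<integral>\<^sup>+y. (F r y)^2 \<partial>PP) = ennreal (V m (s - r)) * indicator {0..s} r"
        by (auto simp: Suc.IH indicator_def)
    qed
    also have "\<dots> = ennreal (\<Sum>i\<le>m. cc m i * s^(Suc (2*m-i)) / Suc (2*m-i)) * indicator {0..} s"
    proof (cases "0 \<le> s")
      case True then show ?thesis by (simp add: IV)
    next
      case False
      then have "\<And>r. ennreal (V m (s - r)) * indicator {0..s} r = 0" by (auto simp: indicator_def)
      then show ?thesis using False by (simp only:) (simp add: indicator_def)
    qed
    finally show ?thesis .
  qed
  have part2: "(\<integral>\<^sup>+x. (\<Sum>i. \<Sum>i'. if i = i' then 0 else a i x * a i' x) \<partial>PP) = ennreal (indicator {0..} s * s^(2*m+2) / (fact (Suc m))^2)"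
  proof -
    have f: "integral\<^sup>N PP (F r) = ennreal (P m s r)" for r
    proof -
      have "F r = (\<lambda>y. indicator {..s} r * Yn m y (s - r))" by (simp add: fun_eq_iff F_def)
      then show ?thesis using fexp by simp
    qed
    have "(\<integral>\<^sup>+x. (\<Sum>i. \<Sum>i'. if i = i' then 0 else a i x * a i' x) \<partial>PP) =
      (\<integral>\<^sup>+a. \<integral>\<^sup>+b. ennreal (indicator {0..} a * indicator {0..} b) * (ennreal (P m s a) * ennreal (P m s (a + b))) \<partial>lborel \<partial>lborel) +
      (\<integral>\<^sup>+a. \<integral>\<^sup>+b. ennreal (indicator {0..} a * indicator {0..} b) * (ennreal (P m s a) * ennreal (P m s (a + b))) \<partial>lborel \<partial>lborel)"
      using C2[OF Fm Fm] by (simp only: f aF)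
    also have "\<dots> = ennreal (indicator {0..} s * s^(2*m+2) / (2 * (fact (Suc m))^2)) + ennreal (indicator {0..} s * s^(2*m+2) / (2 * (fact (Suc m))^2))"
      by (simp only: CROSS)
    also have "\<dots> = ennreal (indicator {0..} s * s^(2*m+2) / (fact (Suc m))^2)"
      by (subst ennreal_plus[symmetric]) (auto simp: indicator_def)
    finally show ?thesis .
  qed
  have "(\<integral>\<^sup>+x. (Yn (Suc m) x s)^2 \<partial>PP) = (\<integral>\<^sup>+x. (\<Sum>i. (a i x)^2) \<partial>PP) + (\<integral>\<^sup>+x. (\<Sum>i. \<Sum>i'. if i = i' then 0 else a i x * a i' x) \<partial>PP)"
    unfolding sq by (rule nn_integral_add[OF m1 m2])
  also have "\<dots> = ennreal (indicator {0..} s * V (Suc m) s)"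
  proof (cases "0 \<le> s")
    case True
    define A where "A = (\<Sum>i\<le>m. cc m i * s^(Suc (2*m-i)) / Suc (2*m-i))"
    define B where "B = s^(2*m+2) / (fact (Suc m))^2"
    have nA: "0 \<le> A" unfolding A_def using True by (auto intro!: sum_nonneg divide_nonneg_nonneg mult_nonneg_nonneg cc_nonneg)
    have nB: "0 \<le> B" unfolding B_def using True by auto
    have "ennreal A * indicator {0..} s + ennreal (indicator {0..} s * B) = ennreal A + ennreal B"
      using True by simp
    also have "\<dots> = ennreal (A + B)" by (rule ennreal_plus[symmetric, OF nA nB])
    also have "A + B = indicator {0..} s * V (Suc m) s"
      using True unfolding A_def B_def V_rec by simp
    finally show ?thesis unfolding part1 part2 A_def B_def by (simp add: times_divide_eq_right)
  next
    case False
    then show ?thesis unfolding part1 part2 by simp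
  qed
  finally show ?case .
qed


definition cur :: "tr \<Rightarrow> (nat list \<Rightarrow> nat \<Rightarrow> real)" where "cur x = (\<lambda>v l. x (v, l))"

lemma cmj_S_cur: "cmj_S (cur x) [] j = SS x j"
  by (simp add: cmj_S_def SS_def cur_def)

lemma birth_shift: "cmj_birth y v u = cmj_birth (\<lambda>w l. y (v @ w) l) [] u"
proof (induction u arbitrary: y v)
  case Nil
  then show ?case by simp
next
  case (Cons n u)
  have "cmj_birth (\<lambda>w l. y (v @ w) l) [n] u = cmj_birth (\<lambda>w l. y (v @ [n] @ w) l) [] u"
    using Cons.IH[of "\<lambda>w l. y (v @ w) l" "[n]"] by simp
  moreover have "cmj_birth y (v @ [n]) u = cmj_birth (\<lambda>w l. y (v @ [n] @ w) l) [] u"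
    using Cons.IH[of y "v @ [n]"] by simp
  ultimately show ?case by (simp add: cmj_S_def)
qed

lemma cur_sub: "(\<lambda>w l. cur x ([j] @ w) l) = cur (sub j x)"
  by (simp add: cur_def sub_def fun_eq_iff)

definition CS :: "(nat list \<Rightarrow> nat \<Rightarrow> real) \<Rightarrow> nat \<Rightarrow> real \<Rightarrow> nat list set" where
  "CS y m s = {u. length u = m \<and> (\<forall>i\<in>set u. 1 \<le> i) \<and> cmj_birth y [] u \<le> s}"

lemma cmj_Y_CS: "cmj_Y (cur x) [j] m s = real (card (CS (cur (sub j x)) m s))"
proof -
  have "(\<lambda>w. cur x (j # w)) = cur (sub j x)" by (simp add: cur_def sub_def fun_eq_iff)
  then show ?thesis unfolding cmj_Y_def CS_def by (subst birth_shift) simp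
qed

lemma emeasure_count_image_inj:
  assumes "inj f"
  shows "emeasure (count_space UNIV) (f ` A) = emeasure (count_space UNIV) A"
proof -
  have "finite (f ` A) \<longleftrightarrow> finite A" using assms finite_image_iff[of f A] by (simp add: inj_on_def)
  moreover have "card (f ` A) = card A" using assms by (simp add: card_image inj_on_def)
  ultimately show ?thesis by (simp add: emeasure_count_space)
qed

lemma count_rec:
  "emeasure (count_space UNIV) (CS y (Suc m) s) =
    (\<Sum>i. emeasure (count_space UNIV) (CS (\<lambda>w l. y ([Suc i] @ w) l) m (s - cmj_S y [] (Suc i))))"
proof -
  define A where "A i = (\<lambda>u. Suc i # u) ` CS (\<lambda>w l. y ([Suc i] @ w) l) m (s - cmj_S y [] (Suc i))" for i
  have U: "CS y (Suc m) s = (\<Union>i. A i)"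
  proof (intro set_eqI iffI)
    fix u assume "u \<in> CS y (Suc m) s"
    then obtain n u' where u: "u = n # u'" "length u' = m" "1 \<le> n" "\<forall>i\<in>set u'. 1 \<le> i" "cmj_birth y [] (n # u') \<le> s"
      unfolding CS_def by (cases u) auto
    then obtain i where n: "n = Suc i" by (cases n) auto
    have "cmj_birth y [n] u' = cmj_birth (\<lambda>w l. y ([n] @ w) l) [] u'" by (rule birth_shift)
    then have "u' \<in> CS (\<lambda>w l. y ([Suc i] @ w) l) m (s - cmj_S y [] (Suc i))"
      using u n unfolding CS_def by simp
    then show "u \<in> (\<Union>i. A i)" unfolding A_def using u n by auto
  next
    fix u assume "u \<in> (\<Union>i. A i)"
    then obtain i u' where u: "u = Suc i # u'" "u' \<in> CS (\<lambda>w l. y ([Suc i] @ w) l) m (s - cmj_S y [] (Suc i))"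
      unfolding A_def by auto
    have "cmj_birth y [Suc i] u' = cmj_birth (\<lambda>w l. y ([Suc i] @ w) l) [] u'" by (rule birth_shift)
    then show "u \<in> CS y (Suc m) s" using u unfolding CS_def by auto
  qed
  have disj: "disjoint_family A"
    unfolding disjoint_family_on_def A_def by auto
  have "(\<Sum>i. emeasure (count_space UNIV) (A i)) = emeasure (count_space UNIV) (\<Union>i. A i)"
    by (rule suminf_emeasure[OF _ disj]) auto
  moreover have "emeasure (count_space UNIV) (A i) = emeasure (count_space UNIV) (CS (\<lambda>w l. y ([Suc i] @ w) l) m (s - cmj_S y [] (Suc i)))" for i
    unfolding A_def by (rule emeasure_count_image_inj) (simp add: inj_def)
  ultimately show ?thesis using U by simp
qed

fun Zn :: "nat \<Rightarrow> tr \<Rightarrow> real \<Rightarrow> ennreal" where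
  "Zn 0 x s = indicator {0..} s"
| "Zn (Suc m) x s = (\<Sum>i. Zn m (sub (Suc i) x) (s - SS x (Suc i)))"

lemma CS0: "CS y 0 s = (if 0 \<le> s then {[]} else {})"
  by (auto simp: CS_def)

lemma Zn_count: "Zn m x s = emeasure (count_space UNIV) (CS (cur x) m s)"
proof (induction m arbitrary: x s)
  case 0
  then show ?case by (simp add: CS0)
next
  case (Suc m)
  show ?case
    unfolding count_rec Zn.simps Suc.IH cur_sub cmj_S_cur ..
qed

lemma Zn_measurable: "(\<lambda>(s,x). Zn m x s) \<in> borel_measurable (borel \<Otimes>\<^sub>M PP)"
proof (induction m)
  case 0
  then show ?case by simp
next
  case (Suc m)
  have t: "(\<lambda>(s,x). Zn m (sub (Suc i) x) (s - SS x (Suc i))) \<in> borel_measurable (borel \<Otimes>\<^sub>M PP)" for i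
  proof -
    have "(\<lambda>(s,x). (s - SS x (Suc i), sub (Suc i) x)) \<in> measurable (borel \<Otimes>\<^sub>M PP) (borel \<Otimes>\<^sub>M PP)"
      by measurable
    from measurable_comp[OF this Suc.IH] show ?thesis
      by (simp add: o_def split_beta)
  qed
  have "(\<lambda>p. \<Sum>i. (\<lambda>(s,x). Zn m (sub (Suc i) x) (s - SS x (Suc i))) p) \<in> borel_measurable (borel \<Otimes>\<^sub>M PP)"
    by (rule borel_measurable_suminf_order) (rule t)
  then show ?case by (simp add: split_beta)
qed

definition nonneg :: "tr \<Rightarrow> bool" where "nonneg x \<longleftrightarrow> (\<forall>i. 0 \<le> x i)"

lemma nonneg_sub: "nonneg x \<Longrightarrow> nonneg (sub j x)"
  by (auto simp: nonneg_def sub_def split: prod.split)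

lemma birth_nonneg: "(\<And>v l. 0 \<le> y v l) \<Longrightarrow> 0 \<le> cmj_birth y v u"
proof (induction u arbitrary: v)
  case (Cons n u)
  have "0 \<le> cmj_S y v n" unfolding cmj_S_def by (intro sum_nonneg Cons.prems)
  then show ?case using Cons by simp
qed simp

lemma Zn_neg: "nonneg x \<Longrightarrow> s < 0 \<Longrightarrow> Zn m x s = 0"
proof -
  assume x: "nonneg x" and s: "s < 0"
  have b: "0 \<le> cmj_birth (cur x) [] u" for u
    by (rule birth_nonneg) (use x in \<open>auto simp: nonneg_def cur_def\<close>)
  have "CS (cur x) m s = {}"
    using b s unfolding CS_def by (auto simp: not_le intro: less_le_trans)
  then show ?thesis by (simp add: Zn_count)
qed

lemma Yn_Zn: "nonneg x \<Longrightarrow> Yn m x s = Zn m x s"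
proof (induction m arbitrary: x s)
  case 0
  then show ?case by simp
next
  case (Suc m)
  have "indicator {..s} (SS x (Suc i)) * Yn m (sub (Suc i) x) (s - SS x (Suc i)) = Zn m (sub (Suc i) x) (s - SS x (Suc i))" for i
  proof (cases "SS x (Suc i) \<le> s")
    case True
    then show ?thesis using Suc.IH[OF nonneg_sub[OF Suc.prems]] by simp
  next
    case False
    then show ?thesis using Zn_neg[OF nonneg_sub[OF Suc.prems]] by simp
  qed
  then show ?case by simp
qed

lemma AE_nonneg: "AE x in PP. nonneg x"
proof -
  have "AE y in E1. 0 \<le> y"
    unfolding E1_def by (subst AE_density) (auto simp: exponential_density_def)
  then have "\<And>i. AE x in PP. 0 \<le> x i"
    unfolding PP_def by (intro AE_PiM_component prob_space_E1) auto
  then have "AE x in PP. \<forall>i. 0 \<le> x i"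
    by (subst AE_all_countable) auto
  then show ?thesis by (simp add: nonneg_def)
qed


lemma P_sq: "ennreal (P m t r) * ennreal (P m t r) * indicator {0..} r = ennreal (1 / fact m ^ 2 * (t - r)^(2*m)) * indicator {0..t} r"
proof -
  have "ennreal (P m t r) * ennreal (P m t r) = ennreal (P m t r * P m t r)"
    by (rule ennreal_mult''[symmetric]) (rule P_nonneg)
  moreover have "P m t r * P m t r = indicator {..t} r * (1 / fact m ^ 2 * (t - r)^(2*m))"
    by (simp add: P_def indicator_def power2_eq_square power_add[symmetric] mult_2)
  ultimately show ?thesis by (auto simp: indicator_def)
qed

lemma MIX:
  fixes F :: "real \<Rightarrow> tr \<Rightarrow> ennreal"
  assumes Fm[measurable]: "(\<lambda>(r,y). F r y) \<in> borel_measurable (borel \<Otimes>\<^sub>M PP)"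
    and Fint: "\<And>r. (\<integral>\<^sup>+y. F r y \<partial>PP) = ennreal (P m t r)"
    and t: "0 \<le> t"
  shows "(\<integral>\<^sup>+x. (\<Sum>i. F (SS x (Suc i)) (sub (Suc i) x)) * (\<Sum>i. ennreal (P m t (SS x (Suc i)))) \<partial>PP) =
    ennreal (t^(Suc (2*m)) / (fact m ^ 2 * Suc (2*m)) + t^(2*m+2) / fact (Suc m)^2)"
proof -
  define G where "G r y = ennreal (P m t r)" for r and y :: tr
  have Pm[measurable]: "P m t \<in> borel_measurable borel" unfolding P_def by measurable
  have Gm[measurable]: "(\<lambda>(r,y). G r y) \<in> borel_measurable (borel \<Otimes>\<^sub>M PP)" unfolding G_def by measurable
  have Gint: "(\<integral>\<^sup>+y. G r y \<partial>PP) = ennreal (P m t r)" for r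
    unfolding G_def by (simp add: PP.emeasure_space_1)
  have FGm: "(\<lambda>(r,y). F r y * G r y) \<in> borel_measurable (borel \<Otimes>\<^sub>M PP)" by measurable
  define a where "a i x = F (SS x (Suc i)) (sub (Suc i) x)" for i x
  define b where "b i x = G (SS x (Suc i)) (sub (Suc i) x)" for i x
  have am[measurable]: "a i \<in> borel_measurable PP" for i
  proof -
    have "(\<lambda>x. (SS x (Suc i), sub (Suc i) x)) \<in> measurable PP (borel \<Otimes>\<^sub>M PP)" by measurable
    moreover have "a i = (\<lambda>x. (\<lambda>(r,y). F r y) (SS x (Suc i), sub (Suc i) x))" by (simp add: fun_eq_iff a_def)
    ultimately show ?thesis using measurable_comp[OF _ Fm] by (simp add: o_def)
  qed
  have bm[measurable]: "b i \<in> borel_measurable PP" for i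
    unfolding b_def G_def by measurable
  have prod: "(\<Sum>i. a i x) * (\<Sum>i. b i x) = (\<Sum>i. a i x * b i x) + (\<Sum>i. \<Sum>i'. if i = i' then 0 else a i x * b i' x)" for x
    by (rule PROD)
  have m1: "(\<lambda>x. \<Sum>i. a i x * b i x) \<in> borel_measurable PP"
    by (rule borel_measurable_suminf_order) measurable
  have m2: "(\<lambda>x. \<Sum>i. \<Sum>i'. if i = i' then 0 else a i x * b i' x) \<in> borel_measurable PP"
    by (intro borel_measurable_suminf_order) measurable
  have part1: "(\<integral>\<^sup>+x. (\<Sum>i. a i x * b i x) \<partial>PP) = ennreal (t^(Suc (2*m)) / (fact m ^ 2 * Suc (2*m)))"
  proof -
    have "(\<integral>\<^sup>+x. (\<Sum>i. a i x * b i x) \<partial>PP) = (\<integral>\<^sup>+r. indicator {0..} r * (\<integral>\<^sup>+y. F r y * G r y \<partial>PP) \<partial>lborel)"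
      using C1[OF FGm] by (simp add: a_def b_def)
    also have "\<dots> = (\<integral>\<^sup>+r. ennreal (1 / fact m ^ 2 * (t - r)^(2*m)) * indicator {0..t} r \<partial>lborel)"
    proof (intro nn_integral_cong)
      fix r
      have "(\<integral>\<^sup>+y. F r y * G r y \<partial>PP) = (\<integral>\<^sup>+y. F r y \<partial>PP) * ennreal (P m t r)"
        unfolding G_def by (rule nn_integral_multc) (use measurable_slice_PP[OF Fm] in simp)
      then show "indicator {0..} r * (\<integral>\<^sup>+y. F r y * G r y \<partial>PP) = ennreal (1 / fact m ^ 2 * (t - r)^(2*m)) * indicator {0..t} r"
        using P_sq[of m t r] by (simp add: Fint ac_simps)
    qed
    also have "\<dots> = ennreal (1 / fact m ^ 2 * t^(Suc (2*m)) / Suc (2*m))"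
      using t by (intro PI) auto
    finally show ?thesis by (simp add: ring_distribs)
  qed
  have part2: "(\<integral>\<^sup>+x. (\<Sum>i. \<Sum>i'. if i = i' then 0 else a i x * b i' x) \<partial>PP) = ennreal (t^(2*m+2) / fact (Suc m)^2)"
  proof -
    have "(\<integral>\<^sup>+x. (\<Sum>i. \<Sum>i'. if i = i' then 0 else a i x * b i' x) \<partial>PP) =
      (\<integral>\<^sup>+a. \<integral>\<^sup>+b. ennreal (indicator {0..} a * indicator {0..} b) * (ennreal (P m t a) * ennreal (P m t (a + b))) \<partial>lborel \<partial>lborel) +
      (\<integral>\<^sup>+a. \<integral>\<^sup>+b. ennreal (indicator {0..} a * indicator {0..} b) * (ennreal (P m t a) * ennreal (P m t (a + b))) \<partial>lborel \<partial>lborel)"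
      using C2[OF Fm Gm] by (simp only: Fint Gint a_def b_def)
    also have "\<dots> = ennreal (indicator {0..} t * t^(2*m+2) / (2 * (fact (Suc m))^2)) + ennreal (indicator {0..} t * t^(2*m+2) / (2 * (fact (Suc m))^2))"
      by (simp only: CROSS)
    also have "\<dots> = ennreal (t^(2*m+2) / (fact (Suc m))^2)"
      using t by (subst ennreal_plus[symmetric]) auto
    finally show ?thesis .
  qed
  have "(\<integral>\<^sup>+x. (\<Sum>i. a i x) * (\<Sum>i. b i x) \<partial>PP) = (\<integral>\<^sup>+x. (\<Sum>i. a i x * b i x) \<partial>PP) + (\<integral>\<^sup>+x. (\<Sum>i. \<Sum>i'. if i = i' then 0 else a i x * b i' x) \<partial>PP)"
    unfolding prod by (rule nn_integral_add[OF m1 m2])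
  also have "\<dots> = ennreal (t^(Suc (2*m)) / (fact m ^ 2 * Suc (2*m)) + t^(2*m+2) / fact (Suc m)^2)"
    unfolding part1 part2 using t by (subst ennreal_plus) auto
  finally show ?thesis by (simp add: a_def b_def G_def)
qed


definition Yk :: "nat \<Rightarrow> real \<Rightarrow> tr \<Rightarrow> ennreal" where "Yk m t x = Yn (Suc m) x t"
definition Ae :: "nat \<Rightarrow> real \<Rightarrow> tr \<Rightarrow> ennreal" where "Ae m t x = (\<Sum>i. ennreal (P m t (SS x (Suc i))))"
definition W :: "nat \<Rightarrow> real \<Rightarrow> real" where
  "W m t = t^(Suc (2*m)) / (fact m ^ 2 * Suc (2*m)) + t^(2*m+2) / fact (Suc m)^2"

lemma P_measurable[measurable]: "P m t \<in> borel_measurable borel" unfolding P_def by measurable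

lemma Yk_measurable[measurable]: "Yk m t \<in> borel_measurable PP"
  unfolding Yk_def by measurable

lemma Ae_measurable[measurable]: "Ae m t \<in> borel_measurable PP"
  unfolding Ae_def by (rule borel_measurable_suminf_order) measurable

lemma I1: "0 \<le> t \<Longrightarrow> (\<integral>\<^sup>+x. (Yk m t x)^2 \<partial>PP) = ennreal (V (Suc m) t)"
  unfolding Yk_def using EY2[of "Suc m" t] by (simp del: Yn.simps)

lemma I2: "0 \<le> t \<Longrightarrow> (\<integral>\<^sup>+x. Yk m t x * Ae m t x \<partial>PP) = ennreal (W m t)"
proof -
  assume t: "0 \<le> t"
  have Fm: "(\<lambda>(r,y). indicator {..t} r * Yn m y (t - r)) \<in> borel_measurable (borel \<Otimes>\<^sub>M PP)"
    using Yn_measurable_F[of m t] by measurable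
  show ?thesis
    using MIX[OF Fm fexp t] unfolding Yk_def Ae_def W_def by simp
qed

lemma I3: "0 \<le> t \<Longrightarrow> (\<integral>\<^sup>+x. Ae m t x * Ae m t x \<partial>PP) = ennreal (W m t)"
proof -
  assume t: "0 \<le> t"
  have Fm: "(\<lambda>(r,y::tr). ennreal (P m t r)) \<in> borel_measurable (borel \<Otimes>\<^sub>M PP)"
    by measurable
  have Fi: "(\<integral>\<^sup>+y. ennreal (P m t r) \<partial>PP) = ennreal (P m t r)" for r
    by (simp add: PP.emeasure_space_1)
  show ?thesis
    using MIX[OF Fm Fi t] unfolding Ae_def W_def by simp
qed

lemma W_nonneg: "0 \<le> t \<Longrightarrow> 0 \<le> W m t"
  unfolding W_def by auto

lemma REAL:
  assumes t: "0 \<le> t"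
  shows "has_bochner_integral PP (\<lambda>x. (enn2real (Yk m t x) - enn2real (Ae m t x))^2) (V (Suc m) t - W m t)"
proof -
  have fin1: "AE x in PP. Yk m t x < top"
  proof -
    have "AE x in PP. (Yk m t x)^2 \<noteq> \<infinity>"
      by (rule nn_integral_PInf_AE) (auto simp: I1[OF t])
    then show ?thesis by (auto simp: power_eq_top_ennreal top.not_eq_extremum)
  qed
  have fin2: "AE x in PP. Ae m t x < top"
  proof -
    have "AE x in PP. Ae m t x * Ae m t x \<noteq> \<infinity>"
      by (rule nn_integral_PInf_AE) (auto simp: I3[OF t])
    then show ?thesis by (auto simp: ennreal_mult_eq_top_iff top.not_eq_extremum)
  qed
  have h1: "has_bochner_integral PP (\<lambda>x. enn2real (Yk m t x)^2) (V (Suc m) t)"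
  proof (rule has_bochner_integral_nn_integral)
    show "0 \<le> V (Suc m) t" using t by (rule V_nonneg)
    have "(\<integral>\<^sup>+x. ennreal (enn2real (Yk m t x)^2) \<partial>PP) = (\<integral>\<^sup>+x. (Yk m t x)^2 \<partial>PP)"
      by (rule nn_integral_cong_AE) (use fin1 in \<open>auto simp: ennreal_power[symmetric]\<close>)
    then show "(\<integral>\<^sup>+x. ennreal (enn2real (Yk m t x)^2) \<partial>PP) = ennreal (V (Suc m) t)"
      using I1[OF t] by simp
  qed auto
  have h2: "has_bochner_integral PP (\<lambda>x. enn2real (Yk m t x) * enn2real (Ae m t x)) (W m t)"
  proof (rule has_bochner_integral_nn_integral)
    show "0 \<le> W m t" using t by (rule W_nonneg)
    have "(\<integral>\<^sup>+x. ennreal (enn2real (Yk m t x) * enn2real (Ae m t x)) \<partial>PP) = (\<integral>\<^sup>+x. Yk m t x * Ae m t x \<partial>PP)"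
      by (rule nn_integral_cong_AE) (use fin1 fin2 in \<open>auto simp: ennreal_mult''\<close>)
    then show "(\<integral>\<^sup>+x. ennreal (enn2real (Yk m t x) * enn2real (Ae m t x)) \<partial>PP) = ennreal (W m t)"
      using I2[OF t] by simp
  qed auto
  have h3: "has_bochner_integral PP (\<lambda>x. enn2real (Ae m t x) * enn2real (Ae m t x)) (W m t)"
  proof (rule has_bochner_integral_nn_integral)
    show "0 \<le> W m t" using t by (rule W_nonneg)
    have "(\<integral>\<^sup>+x. ennreal (enn2real (Ae m t x) * enn2real (Ae m t x)) \<partial>PP) = (\<integral>\<^sup>+x. Ae m t x * Ae m t x \<partial>PP)"
      by (rule nn_integral_cong_AE) (use fin2 in \<open>auto simp: ennreal_mult''\<close>)
    then show "(\<integral>\<^sup>+x. ennreal (enn2real (Ae m t x) * enn2real (Ae m t x)) \<partial>PP) = ennreal (W m t)"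
      using I3[OF t] by simp
  qed auto
  have "has_bochner_integral PP (\<lambda>x. enn2real (Yk m t x)^2 - 2 * (enn2real (Yk m t x) * enn2real (Ae m t x)) + enn2real (Ae m t x) * enn2real (Ae m t x))
      (V (Suc m) t - 2 * W m t + W m t)"
    by (intro has_bochner_integral_add has_bochner_integral_diff has_bochner_integral_mult_right h1 h2 h3)
  moreover have "(\<lambda>x. enn2real (Yk m t x)^2 - 2 * (enn2real (Yk m t x) * enn2real (Ae m t x)) + enn2real (Ae m t x) * enn2real (Ae m t x))
      = (\<lambda>x. (enn2real (Yk m t x) - enn2real (Ae m t x))^2)"
    by (auto simp: fun_eq_iff power2_eq_square algebra_simps)
  ultimately show ?thesis by simp
qed


definition Phi :: "nat \<Rightarrow> real \<Rightarrow> tr \<Rightarrow> real" where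
  "Phi m t x = (\<Sum>j | 1 \<le> j \<and> cmj_S (cur x) [] j \<le> t.
      cmj_Y (cur x) [j] m (t - cmj_S (cur x) [] j) - cmj_U m (t - cmj_S (cur x) [] j))^2"

lemma card_enn2real: "real (card A) = enn2real (emeasure (count_space UNIV) A)"
  by (simp add: emeasure_count_space)

lemma cmj_Y_Zn: "cmj_Y (cur x) [j] m s = enn2real (Zn m (sub j x) s)"
  by (simp add: cmj_Y_CS card_enn2real Zn_count)

lemma SUMJ:
  fixes h :: "nat \<Rightarrow> 'a \<Rightarrow> real" and Q :: "nat \<Rightarrow> 'a \<Rightarrow> bool"
  assumes hm[measurable]: "\<And>j. h j \<in> borel_measurable M"
    and Qm[measurable]: "\<And>j. Measurable.pred M (Q j)"
  shows "(\<lambda>x. \<Sum>j | Q j x. h j x) \<in> borel_measurable M"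
proof (rule borel_measurable_LIMSEQ_real)
  define fin where "fin x = (\<exists>N::nat. \<forall>j. Q j x \<longrightarrow> j < N)" for x
  have finm[measurable]: "Measurable.pred M fin" unfolding fin_def by measurable
  have fin_iff: "fin x \<longleftrightarrow> finite {j. Q j x}" for x
  proof
    assume "fin x" then obtain N where "\<forall>j. Q j x \<longrightarrow> j < N" unfolding fin_def by auto
    then have "{j. Q j x} \<subseteq> {..<N}" by auto
    then show "finite {j. Q j x}" by (rule finite_subset) simp
  next
    assume "finite {j. Q j x}"
    from finite_nat_bounded[OF this] obtain N where "{j. Q j x} \<subseteq> {..<N}" by blast
    then show "fin x" unfolding fin_def by auto
  qed
  define u where "u N x = (\<Sum>j<N. if Q j x \<and> fin x then h j x else 0)" for N x
  show "u N \<in> borel_measurable M" for N unfolding u_def by measurable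
  fix x
  show "(\<lambda>N. u N x) \<longlonglongrightarrow> (\<Sum>j | Q j x. h j x)"
  proof (cases "fin x")
    case True
    then obtain N0 where N0: "\<forall>j. Q j x \<longrightarrow> j < N0" unfolding fin_def by auto
    have "u N x = (\<Sum>j | Q j x. h j x)" if "N0 \<le> N" for N
    proof -
      have "u N x = (\<Sum>j\<in>{..<N} \<inter> {j. Q j x}. h j x)"
        unfolding u_def using True by (simp add: sum.inter_restrict)
      also have "{..<N} \<inter> {j. Q j x} = {j. Q j x}" using N0 that by auto
      finally show ?thesis .
    qed
    then show ?thesis by (intro tendsto_eventually) (auto simp: eventually_sequentially)
  next
    case False
    then have "u N x = 0" for N unfolding u_def by simp
    moreover have "(\<Sum>j | Q j x. h j x) = 0" using False fin_iff by simp
    ultimately show ?thesis by simp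
  qed
qed

lemma Phi_alt: "Phi m t x = (\<Sum>j | 1 \<le> j \<and> SS x j \<le> t. enn2real (Zn m (sub j x) (t - SS x j)) - cmj_U m (t - SS x j))^2"
  unfolding Phi_def cmj_S_cur cmj_Y_Zn ..

lemma Phi_measurable: "Phi m t \<in> borel_measurable PP"
proof -
  have z: "(\<lambda>x. Zn m (sub j x) (t - SS x j)) \<in> borel_measurable PP" for j
  proof -
    have "(\<lambda>x. (t - SS x j, sub j x)) \<in> measurable PP (borel \<Otimes>\<^sub>M PP)" by measurable
    from measurable_comp[OF this Zn_measurable] show ?thesis by (simp add: o_def)
  qed
  have h: "(\<lambda>x. enn2real (Zn m (sub j x) (t - SS x j)) - cmj_U m (t - SS x j)) \<in> borel_measurable PP" for j
    using z[of j] unfolding cmj_U_def by measurable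
  have q: "Measurable.pred PP (\<lambda>x. 1 \<le> j \<and> SS x j \<le> t)" for j
    by measurable
  have "(\<lambda>x. \<Sum>j | 1 \<le> j \<and> SS x j \<le> t. enn2real (Zn m (sub j x) (t - SS x j)) - cmj_U m (t - SS x j)) \<in> borel_measurable PP"
    by (rule SUMJ[OF h q])
  then have "(\<lambda>x. (\<Sum>j | 1 \<le> j \<and> SS x j \<le> t. enn2real (Zn m (sub j x) (t - SS x j)) - cmj_U m (t - SS x j))^2) \<in> borel_measurable PP"
    by measurable
  then show ?thesis unfolding Phi_alt[abs_def] .
qed

lemma finite_ind_sum:
  fixes f :: "nat \<Rightarrow> 'b"
  assumes "(\<Sum>i. indicator A (f i) :: ennreal) \<noteq> \<infinity>"
  shows "finite {i. f i \<in> A}"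
proof (rule ccontr)
  assume inf: "infinite {i. f i \<in> A}"
  have "of_nat n \<le> (\<Sum>i. indicator A (f i) :: ennreal)" for n
  proof -
    obtain F where F: "finite F" "F \<subseteq> {i. f i \<in> A}" "card F = n"
      using infinite_arbitrarily_large[OF inf] by blast
    have "(\<Sum>i\<in>F. indicator A (f i) :: ennreal) = (\<Sum>i\<in>F. 1)"
      using F(2) by (intro sum.cong) (auto simp: indicator_def)
    then have "of_nat n = (\<Sum>i\<in>F. indicator A (f i) :: ennreal)" using F(1,3) by simp
    also have "\<dots> \<le> (\<Sum>i. indicator A (f i))" by (rule sum_le_suminf) (use F(1) in auto)
    finally show ?thesis .
  qed
  then have "(\<Sum>i. indicator A (f i) :: ennreal) = \<infinity>"
  proof (rule_tac ccontr)
    assume all: "\<And>n. of_nat n \<le> (\<Sum>i. indicator A (f i) :: ennreal)"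
      and ne: "(\<Sum>i. indicator A (f i) :: ennreal) \<noteq> \<infinity>"
    then obtain r where r: "(\<Sum>i. indicator A (f i) :: ennreal) = ennreal r" "0 \<le> r"
      by (cases "(\<Sum>i. indicator A (f i) :: ennreal)") auto
    obtain n :: nat where n: "r < real n" using reals_Archimedean2 by blast
    have "ennreal r < of_nat n" using n r(2) by (simp add: ennreal_of_nat_eq_real_of_nat ennreal_less_iff)
    with all[of n] r(1) show False by simp
  qed
  with assms show False by simp
qed


lemma suminf_J:
  fixes f :: "nat \<Rightarrow> ennreal"
  assumes J: "finite J" "0 \<notin> J" and z: "\<And>i. Suc i \<notin> J \<Longrightarrow> f (Suc i) = 0"
  shows "(\<Sum>i. f (Suc i)) = (\<Sum>j\<in>J. f j)"
proof -
  have fin: "finite {i. Suc i \<in> J}"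
    using J(1) by (rule finite_vimageI[where h=Suc, unfolded vimage_def]) simp
  have "(\<Sum>i. f (Suc i)) = (\<Sum>i\<in>{i. Suc i \<in> J}. f (Suc i))"
    by (rule suminf_finite[OF fin]) (use z in auto)
  also have "\<dots> = (\<Sum>j\<in>Suc ` {i. Suc i \<in> J}. f j)"
    by (rule sum.reindex[symmetric, unfolded o_def]) simp
  also have "Suc ` {i. Suc i \<in> J} = J"
  proof (intro set_eqI iffI)
    fix j assume "j \<in> J"
    then show "j \<in> Suc ` {i. Suc i \<in> J}" using J(2) by (cases j) auto
  qed auto
  finally show ?thesis .
qed

lemma I0: "0 \<le> t \<Longrightarrow> (\<integral>\<^sup>+x. (\<Sum>i. indicator {..t} (SS x (Suc i)) :: ennreal) \<partial>PP) = ennreal t"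
proof -
  assume t: "0 \<le> t"
  have Fm: "(\<lambda>(r,y::tr). indicator {..t} r :: ennreal) \<in> borel_measurable (borel \<Otimes>\<^sub>M PP)" by measurable
  have "(\<integral>\<^sup>+x. (\<Sum>i. indicator {..t} (SS x (Suc i)) :: ennreal) \<partial>PP) = (\<integral>\<^sup>+r. indicator {0..} r * (\<integral>\<^sup>+y. indicator {..t} r \<partial>PP) \<partial>lborel)"
    using C1[OF Fm] by simp
  also have "\<dots> = (\<integral>\<^sup>+r. indicator {0..t} r \<partial>lborel)"
    by (intro nn_integral_cong) (auto simp: PP.emeasure_space_1 indicator_def)
  also have "\<dots> = ennreal t" using t by simp
  finally show ?thesis .
qed

lemma PW:
  assumes x: "nonneg x" and fy: "Yk m t x < top" and fi: "(\<Sum>i. indicator {..t} (SS x (Suc i)) :: ennreal) \<noteq> \<infinity>"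
  shows "Phi m t x = (enn2real (Yk m t x) - enn2real (Ae m t x))^2"
proof -
  define J where "J = {j. 1 \<le> j \<and> SS x j \<le> t}"
  have "finite {i. SS x (Suc i) \<in> {..t}}" by (rule finite_ind_sum[OF fi])
  then have "finite (Suc ` {i. SS x (Suc i) \<in> {..t}})" by simp
  moreover have "Suc ` {i. SS x (Suc i) \<in> {..t}} = J"
  proof (intro set_eqI iffI)
    fix j assume "j \<in> J" then show "j \<in> Suc ` {i. SS x (Suc i) \<in> {..t}}"
      unfolding J_def by (cases j) auto
  qed (auto simp: J_def)
  ultimately have finJ: "finite J" by simp
  have J0: "0 \<notin> J" by (simp add: J_def)
  define y where "y j = Yn m (sub j x) (t - SS x j)" for j
  have Yk_eq: "Yk m t x = (\<Sum>j\<in>J. y j)"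
  proof -
    have "Yk m t x = (\<Sum>i. (\<lambda>j. indicator {..t} (SS x j) * y j) (Suc i))"
      by (simp add: Yk_def y_def)
    also have "\<dots> = (\<Sum>j\<in>J. indicator {..t} (SS x j) * y j)"
      by (rule suminf_J[OF finJ J0]) (auto simp: J_def)
    also have "\<dots> = (\<Sum>j\<in>J. y j)"
      by (intro sum.cong) (auto simp: J_def)
    finally show ?thesis .
  qed
  have yfin: "y j < top" if "j \<in> J" for j
  proof -
    have "y j \<le> (\<Sum>j\<in>J. y j)" by (rule member_le_sum) (use that finJ in auto)
    then show ?thesis using fy Yk_eq by (simp add: le_less_trans)
  qed
  have e1: "enn2real (Yk m t x) = (\<Sum>j\<in>J. enn2real (y j))"
    unfolding Yk_eq by (subst enn2real_sum) (auto simp: yfin)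
  have Ae_eq: "Ae m t x = ennreal (\<Sum>j\<in>J. P m t (SS x j))"
  proof -
    have "Ae m t x = (\<Sum>i. (\<lambda>j. ennreal (P m t (SS x j))) (Suc i))"
      by (simp add: Ae_def)
    also have "\<dots> = (\<Sum>j\<in>J. ennreal (P m t (SS x j)))"
      by (rule suminf_J[OF finJ J0]) (auto simp: J_def P_def)
    also have "\<dots> = ennreal (\<Sum>j\<in>J. P m t (SS x j))"
      by (rule sum_ennreal) (rule P_nonneg)
    finally show ?thesis .
  qed
  have e2: "enn2real (Ae m t x) = (\<Sum>j\<in>J. P m t (SS x j))"
    unfolding Ae_eq by (simp add: sum_nonneg P_nonneg)
  have "Phi m t x = (\<Sum>j\<in>J. enn2real (Zn m (sub j x) (t - SS x j)) - cmj_U m (t - SS x j))^2"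
    unfolding Phi_alt J_def ..
  also have "\<dots> = (\<Sum>j\<in>J. enn2real (y j) - P m t (SS x j))^2"
  proof -
    have "enn2real (Zn m (sub j x) (t - SS x j)) - cmj_U m (t - SS x j) = enn2real (y j) - P m t (SS x j)" if "j \<in> J" for j
      using that Yn_Zn[OF nonneg_sub[OF x]] unfolding y_def J_def by (simp add: cmj_U_def P_def)
    then show ?thesis by (simp cong: sum.cong)
  qed
  also have "\<dots> = (enn2real (Yk m t x) - enn2real (Ae m t x))^2"
    unfolding e1 e2 by (simp add: sum_subtractf)
  finally show ?thesis .
qed

lemma INT_PP:
  assumes t: "0 \<le> t"
  shows "integral\<^sup>L PP (Phi m t) = V (Suc m) t - W m t"
proof -
  have fin1: "AE x in PP. Yk m t x < top"
  proof -
    have "AE x in PP. (Yk m t x)^2 \<noteq> \<infinity>"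
      by (rule nn_integral_PInf_AE) (auto simp: I1[OF t])
    then show ?thesis by (auto simp: power_eq_top_ennreal top.not_eq_extremum)
  qed
  have fin0: "AE x in PP. (\<Sum>i. indicator {..t} (SS x (Suc i)) :: ennreal) \<noteq> \<infinity>"
  proof (rule nn_integral_PInf_AE)
    show "(\<lambda>x. \<Sum>i. indicator {..t} (SS x (Suc i)) :: ennreal) \<in> borel_measurable PP"
      by (rule borel_measurable_suminf_order) measurable
  qed (auto simp: I0[OF t])
  have ae: "AE x in PP. Phi m t x = (enn2real (Yk m t x) - enn2real (Ae m t x))^2"
    using AE_nonneg fin1 fin0 by eventually_elim (rule PW)
  have "integral\<^sup>L PP (Phi m t) = integral\<^sup>L PP (\<lambda>x. (enn2real (Yk m t x) - enn2real (Ae m t x))^2)"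
    by (rule integral_cong_AE[OF Phi_measurable _ ae]) measurable
  also have "\<dots> = V (Suc m) t - W m t"
    using REAL[OF t] by (rule has_bochner_integral_integral_eq)
  finally show ?thesis .
qed


lemma QSUM:
  "V (Suc m) t - W m t = (\<Sum>n<m. cc (Suc m) (n+2) * t^(2*m - n))"
proof -
  have "V (Suc m) t = (\<Sum>i<Suc (Suc m). cc (Suc m) i * t^(2 * Suc m - i))"
    unfolding V_def by (simp add: lessThan_Suc_atMost)
  also have "\<dots> = cc (Suc m) 0 * t^(2 * Suc m) + cc (Suc m) 1 * t^(2 * Suc m - 1) + (\<Sum>n<m. cc (Suc m) (n+2) * t^(2 * Suc m - (n+2)))"
    by (simp add: sum.lessThan_Suc_shift add.assoc del: sum.lessThan_Suc)
  finally have s: "V (Suc m) t = cc (Suc m) 0 * t^(2 * Suc m) + cc (Suc m) 1 * t^(2 * Suc m - 1) + (\<Sum>n<m. cc (Suc m) (n+2) * t^(2 * Suc m - (n+2)))" .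
  have w: "cc (Suc m) 0 * t^(2 * Suc m) + cc (Suc m) 1 * t^(2 * Suc m - 1) = W m t"
  proof -
    have a: "cc (Suc m) 0 = 1 / fact (Suc m) ^ 2" by (simp add: cc_def)
    have b: "cc (Suc m) 1 = 1 / (fact m ^ 2 * Suc (2*m))" by (simp add: cc_def distrib_left)
    have c: "t^(2 * Suc m) = t^(2*m+2)" "t^(2 * Suc m - 1) = t^(Suc (2*m))" by simp_all
    show ?thesis unfolding a b c W_def by simp
  qed
  have e: "(\<Sum>n<m. cc (Suc m) (n+2) * t^(2 * Suc m - (n+2))) = (\<Sum>n<m. cc (Suc m) (n+2) * t^(2*m - n))"
    by simp
  show ?thesis using s w e by simp
qed

lemma cc_step:
  assumes "i < k"
  shows "cc k (Suc i) \<le> real k * cc k i"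
proof -
  obtain p where p: "k - i = Suc p" using assms by (metis Suc_diff_Suc)
  obtain q where q: "2*k - i = Suc q" using assms by (metis Suc_diff_Suc less_le_trans mult_2 le_add1 nat_less_le)
  have e1: "k - Suc i = p" "2*k - Suc i = q" using p q by auto
  have e2: "2 * (k - i) = Suc (Suc (2*p))" "2 * (k - Suc i) = 2*p" using p e1 by auto
  have qk: "real q + 1 \<le> 2 * real k" using q by linarith
  define A where "A = (fact (2*p) :: real)"
  define B where "B = (fact p :: real)"
  define C where "C = (fact q :: real)"
  have pos: "0 < A" "0 < B" "0 < C" by (auto simp: A_def B_def C_def)
  have c1: "cc k (Suc i) = A / (B^2 * C)"
    unfolding cc_def e1 e2 A_def B_def C_def ..
  have c0: "cc k i = (2*p+2) * (2*p+1) * A / (((p+1) * B)^2 * ((q+1) * C))"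
    unfolding cc_def p q e2 A_def B_def C_def by (simp add: algebra_simps)
  have key: "(real p + 1) * (real q + 1) \<le> 2 * real k * (2 * real p + 1)"
  proof -
    have "(real p + 1) * (real q + 1) \<le> (2 * real p + 1) * (2 * real k)"
      by (rule mult_mono) (use qk in auto)
    then show ?thesis by (simp add: algebra_simps)
  qed
  define G where "G = real k * (2*p+2) * (2*p+1) / ((real p + 1)^2 * (real q + 1))"
  have r: "real k * ((2*p+2) * (2*p+1) * A / (((p+1) * B)^2 * ((q+1) * C))) = A / (B^2 * C) * G"
    unfolding G_def by (simp add: field_simps power2_eq_square)
  have g: "1 \<le> G"
  proof -
    have "(real p + 1)^2 * (real q + 1) = (real p + 1) * ((real p + 1) * (real q + 1))"
      by (simp add: power2_eq_square)
    also have "\<dots> \<le> (real p + 1) * (2 * real k * (2 * real p + 1))"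
      using key by (intro mult_left_mono) auto
    also have "\<dots> = real k * (2*p+2) * (2*p+1)" by (simp add: algebra_simps)
    finally have "(real p + 1)^2 * (real q + 1) \<le> real k * (2*p+2) * (2*p+1)" .
    moreover have "0 < (real p + 1)^2 * (real q + 1)" by simp
    ultimately show ?thesis unfolding G_def by (simp add: le_divide_eq)
  qed
  have "A \<le> A * G" using g pos(1) by simp
  from divide_right_mono[OF this, of "B^2 * C"] pos
  have "A / (B^2 * C) \<le> A / (B^2 * C) * G" by simp
  then have "A / (B^2 * C) \<le> real k * ((2*p+2) * (2*p+1) * A / (((p+1) * B)^2 * ((q+1) * C)))"
    unfolding r .
  then show ?thesis unfolding c1 c0 .
qed


lemma cc_nonneg': "0 \<le> cc k i" by (rule cc_nonneg)

lemma b_bound: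
  assumes t: "0 < t" and n: "n + 2 \<le> Suc m"
  shows "cc (Suc m) (n+2) * t^(2*m - n) \<le> (real (Suc m) / t)^n * (cc (Suc m) 2 * t^(2*m))"
  using n
proof (induction n)
  case 0
  then show ?case by (simp add: numeral_2_eq_2)
next
  case (Suc n)
  have IH: "cc (Suc m) (n+2) * t^(2*m - n) \<le> (real (Suc m) / t)^n * (cc (Suc m) 2 * t^(2*m))"
    using Suc by simp
  have st: "cc (Suc m) (Suc (n+2)) \<le> real (Suc m) * cc (Suc m) (n+2)"
    by (rule cc_step) (use Suc.prems in simp)
  have e: "t^(2*m - n) = t * t^(2*m - Suc n)"
  proof -
    have "2*m - n = Suc (2*m - Suc n)" using Suc.prems by simp
    then show ?thesis by simp
  qed
  have "cc (Suc m) (Suc n + 2) * t^(2*m - Suc n) \<le> real (Suc m) * cc (Suc m) (n+2) * t^(2*m - Suc n)"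
    using st t by (intro mult_right_mono) simp_all
  also have "\<dots> = (real (Suc m) / t) * (cc (Suc m) (n+2) * t^(2*m - n))"
    using t unfolding e by (simp add: field_simps)
  also have "\<dots> \<le> (real (Suc m) / t) * ((real (Suc m) / t)^n * (cc (Suc m) 2 * t^(2*m)))"
    using IH t by (intro mult_left_mono) simp_all
  also have "\<dots> = (real (Suc m) / t)^(Suc n) * (cc (Suc m) 2 * t^(2*m))"
    by simp
  finally show ?case .
qed

lemma Q_lower:
  assumes t: "0 < t" and m: "1 \<le> m"
  shows "cc (Suc m) 2 * t^(2*m) \<le> V (Suc m) t - W m t"
proof -
  have "(\<lambda>n. cc (Suc m) (n+2) * t^(2*m - n)) 0 \<le> (\<Sum>n<m. cc (Suc m) (n+2) * t^(2*m - n))"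
    by (rule member_le_sum) (use m t in \<open>auto intro!: mult_nonneg_nonneg cc_nonneg\<close>)
  then have "cc (Suc m) 2 * t^(2*m) \<le> (\<Sum>n<m. cc (Suc m) (n+2) * t^(2*m - n))"
    by (simp only: add_0 diff_zero)
  then show ?thesis by (simp only: QSUM)
qed

lemma Q_upper:
  assumes t: "0 < t" and r: "real (Suc m) / t < 1"
  shows "V (Suc m) t - W m t \<le> cc (Suc m) 2 * t^(2*m) / (1 - real (Suc m) / t)"
proof -
  define r where "r = real (Suc m) / t"
  have r0: "0 \<le> r" using t by (simp add: r_def)
  have r1: "r < 1" using assms by (simp add: r_def)
  define L where "L = cc (Suc m) 2 * t^(2*m)"
  have L0: "0 \<le> L" unfolding L_def using t by (simp add: cc_nonneg)
  have "V (Suc m) t - W m t = (\<Sum>n<m. cc (Suc m) (n+2) * t^(2*m - n))" by (rule QSUM)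
  also have "\<dots> \<le> (\<Sum>n<m. r^n * L)"
    unfolding r_def L_def by (intro sum_mono b_bound t) auto
  also have "\<dots> = L * (\<Sum>n<m. r^n)" by (simp add: sum_distrib_left mult.commute)
  also have "(\<Sum>n<m. r^n) = (1 - r^m) / (1 - r)"
    using r1 by (subst sum_gp_strict) auto
  also have "\<dots> \<le> 1 / (1 - r)"
    using r0 r1 by (intro divide_right_mono) auto
  finally have "V (Suc m) t - W m t \<le> L * (1 / (1 - r))"
    using L0 by (meson mult_left_mono order_trans)
  then show ?thesis by (simp add: L_def r_def)
qed

lemma LT_aux: "t \<noteq> 0 \<Longrightarrow> a > 0 \<Longrightarrow> b > 0 \<Longrightarrow> F > 0 \<Longrightarrow>
    1/4 * (t^2 * X) / ((a * b * F))^2 * (a/t)^2 = X / (4 * b^2 * F^2)" for t a b F X :: real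
  by (simp add: field_simps power2_eq_square)

lemma LT_aux2: "1 / (F^2 * ((2*N+2)*(2*N+1))) * X = (2*(N+1)/(2*(N+1)-1)) * (X/(4*(N+1)^2*F^2))"
    if "F > 0" "N \<ge> 0" for F N X :: real
proof -
  have a: "2*(N+1)-1 = 2*N+1" by simp
  have p: "2*N+1 > 0" "N+1 > 0" "F^2 > 0" using that by auto
  have "(2*(N+1)/(2*N+1)) * (X/(4*(N+1)^2*F^2)) = X * (2*(N+1)) / ((2*N+1) * (4*(N+1)^2*F^2))"
    by simp
  also have "(2*N+1) * (4*(N+1)^2*F^2) = (2*(N+1)) * (F^2 * ((2*N+2)*(2*N+1)))"
    by (simp add: power2_eq_square algebra_simps)
  also have "X * (2*(N+1)) / ((2*(N+1)) * (F^2 * ((2*N+2)*(2*N+1)))) = X / (F^2 * ((2*N+2)*(2*N+1)))"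
    using p by (subst mult.commute) (rule mult_divide_mult_cancel_left, simp)
  finally show ?thesis unfolding a by simp
qed

lemma LT:
  assumes t: "0 < t" and m: "1 \<le> m"
  shows "cc (Suc m) 2 * t^(2*m) = (2 * real m / (2 * real m - 1)) * (1 / 4 * t ^ (2 * Suc m) / (fact (Suc m))\<^sup>2 * (real (Suc m) / t)\<^sup>2)"
proof -
  obtain n where n: "m = Suc n" using m by (cases m) auto
  have pos: "(0::real) < fact n" "(0::real) < fact (2*n)" by auto
  have c: "cc (Suc (Suc n)) 2 = 1 / (fact n ^ 2 * ((2*real n+2)*(2*real n+1)))"
  proof -
    have "cc (Suc (Suc n)) 2 = fact (2*n) / (fact n ^ 2 * fact (Suc (Suc (2*n))))"
      by (simp add: cc_def numeral_2_eq_2)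
    also have "(fact (Suc (Suc (2*n))) :: real) = (2*real n+2) * (2*real n+1) * fact (2*n)" by (simp add: algebra_simps)
    finally show ?thesis using pos by simp
  qed
  have f2: "(fact (Suc (Suc n)) :: real) = real (Suc (Suc n)) * real (Suc n) * fact n" by (simp add: algebra_simps)
  have tp: "t ^ (2 * Suc (Suc n)) = t^2 * t^(2 * Suc n)" by (simp add: power_add[symmetric])
  have T: "1 / 4 * t ^ (2 * Suc (Suc n)) / (fact (Suc (Suc n)))\<^sup>2 * (real (Suc (Suc n)) / t)\<^sup>2 = t^(2 * Suc n) / (4 * (real (Suc n))^2 * (fact n)^2)"
    unfolding tp f2 using t pos by (intro LT_aux) auto
  have e: "t^(2 * Suc n) = t^(2*m)" using n by simp
  show ?thesis unfolding n c T using LT_aux2[OF pos(1), of "real n" "t^(2 * Suc n)"]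
    by (simp add: ac_simps)
qed


lemma TRANSFER:
  fixes M :: "'a measure" and \<xi> :: "nat list \<Rightarrow> nat \<Rightarrow> 'a \<Rightarrow> real" and F :: "tr \<Rightarrow> real"
  assumes "prob_space M"
    and d: "\<And>v l. distributed M lborel (\<xi> v l) (exponential_density 1)"
    and ind: "prob_space.indep_vars M (\<lambda>_. borel) (\<lambda>(v, l). \<xi> v l) UNIV"
    and Fm: "F \<in> borel_measurable PP"
  shows "prob_space.expectation M (\<lambda>\<omega>. F (\<lambda>(v,l). \<xi> v l \<omega>)) = integral\<^sup>L PP F"
proof -
  interpret prob_space M by fact
  have rv: "random_variable borel ((\<lambda>(v, l). \<xi> v l) i)" for i
    using distributed_measurable[OF d] by (cases i) simp
  have D: "distr M (PiM UNIV (\<lambda>_. borel)) (\<lambda>\<omega>. \<lambda>i\<in>UNIV. (\<lambda>(v, l). \<xi> v l) i \<omega>) = PiM UNIV (\<lambda>i. distr M borel ((\<lambda>(v, l). \<xi> v l) i))"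
    using indep_vars_iff_distr_eq_PiM[where I=UNIV and X="\<lambda>(v, l). \<xi> v l" and M'="\<lambda>_. borel"] rv ind by simp
  have c: "distr M borel ((\<lambda>(v, l). \<xi> v l) i) = E1" for i
  proof (cases i)
    case (Pair v l)
    have "distr M borel (\<xi> v l) = distr M lborel (\<xi> v l)" by (rule distr_cong) auto
    also have "\<dots> = E1" unfolding E1_def by (rule distributed_distr_eq_density[OF d])
    finally show ?thesis using Pair by simp
  qed
  have X: "(\<lambda>\<omega>. \<lambda>i\<in>UNIV. (\<lambda>(v, l). \<xi> v l) i \<omega>) = (\<lambda>\<omega>. \<lambda>(v,l). \<xi> v l \<omega>)"
    by (auto simp: fun_eq_iff restrict_def split: prod.split)
  have DP: "distr M (PiM UNIV (\<lambda>_. borel)) (\<lambda>\<omega>. \<lambda>(v,l). \<xi> v l \<omega>) = PP"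
    using D unfolding X c by (simp add: PP_def)
  have Xm: "(\<lambda>\<omega>. \<lambda>(v,l). \<xi> v l \<omega>) \<in> measurable M (PiM UNIV (\<lambda>_. borel :: real measure))"
  proof -
    have "(\<lambda>\<omega>. \<lambda>i\<in>UNIV. (\<lambda>(v, l). \<xi> v l) i \<omega>) \<in> measurable M (PiM UNIV (\<lambda>_. borel :: real measure))"
      using rv by (intro measurable_restrict) auto
    then show ?thesis unfolding X .
  qed
  have Xm': "(\<lambda>\<omega>. \<lambda>(v,l). \<xi> v l \<omega>) \<in> measurable M PP"
    using Xm by (simp add: measurable_cong_sets[OF refl sets_PP])
  have DP': "distr M PP (\<lambda>\<omega>. \<lambda>(v,l). \<xi> v l \<omega>) = PP"
  proof -
    have "distr M PP (\<lambda>\<omega>. \<lambda>(v,l). \<xi> v l \<omega>) = distr M (PiM UNIV (\<lambda>_. borel)) (\<lambda>\<omega>. \<lambda>(v,l). \<xi> v l \<omega>)"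
      by (rule distr_cong) (auto simp: sets_PP)
    then show ?thesis using DP by simp
  qed
  have "integral\<^sup>L PP F = integral\<^sup>L (distr M PP (\<lambda>\<omega>. \<lambda>(v,l). \<xi> v l \<omega>)) F"
    by (simp add: DP')
  also have "\<dots> = integral\<^sup>L M (\<lambda>\<omega>. F (\<lambda>(v,l). \<xi> v l \<omega>))"
    by (rule integral_distr[OF Xm' Fm])
  finally show ?thesis by simp
qed

theorem lemma4p1:
  fixes M :: "'a measure"
    and \<xi> :: "nat list \<Rightarrow> nat \<Rightarrow> 'a \<Rightarrow> real"
    and k :: "real \<Rightarrow> nat"
  assumes "prob_space M"
    and "\<And>v l. distributed M lborel (\<xi> v l) (exponential_density 1)"
    and "prob_space.indep_vars M (\<lambda>_. borel) (\<lambda>(v, l). \<xi> v l) UNIV"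
    and "filterlim k at_top at_top"
    and "(\<lambda>t. real (k t)) \<in> o[at_top](\<lambda>t. t)"
  shows "(\<lambda>t. prob_space.expectation M (\<lambda>\<omega>.
            (\<Sum>j | 1 \<le> j \<and> cmj_S (\<lambda>v l. \<xi> v l \<omega>) [] j \<le> t.
               cmj_Y (\<lambda>v l. \<xi> v l \<omega>) [j] (k t - 1) (t - cmj_S (\<lambda>v l. \<xi> v l \<omega>) [] j)
               - cmj_U (k t - 1) (t - cmj_S (\<lambda>v l. \<xi> v l \<omega>) [] j)) ^ 2))
         \<sim>[at_top] (\<lambda>t. 1 / 4 * t ^ (2 * k t) / (fact (k t))\<^sup>2 * (real (k t) / t)\<^sup>2)"
proof -
  define E where "E t = prob_space.expectation M (\<lambda>\<omega>.
            (\<Sum>j | 1 \<le> j \<and> cmj_S (\<lambda>v l. \<xi> v l \<omega>) [] j \<le> t.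
               cmj_Y (\<lambda>v l. \<xi> v l \<omega>) [j] (k t - 1) (t - cmj_S (\<lambda>v l. \<xi> v l \<omega>) [] j)
               - cmj_U (k t - 1) (t - cmj_S (\<lambda>v l. \<xi> v l \<omega>) [] j)) ^ 2)" for t
  define T where "T t = 1 / 4 * t ^ (2 * k t) / (fact (k t))\<^sup>2 * (real (k t) / t)\<^sup>2" for t
  define e where "e t = 2 * real (k t - 1) / (2 * real (k t - 1) - 1)" for t
  define r where "r t = real (k t) / t" for t
  have EQ: "E t = V (Suc (k t - 1)) t - W (k t - 1) t" if "0 \<le> t" for t
  proof -
    have cur: "cur (\<lambda>(v,l). \<xi> v l \<omega>) = (\<lambda>v l. \<xi> v l \<omega>)" for \<omega> by (simp add: cur_def)
    have "E t = prob_space.expectation M (\<lambda>\<omega>. Phi (k t - 1) t (\<lambda>(v,l). \<xi> v l \<omega>))"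
      unfolding E_def Phi_def cur ..
    also have "\<dots> = integral\<^sup>L PP (Phi (k t - 1) t)"
      by (rule TRANSFER[OF assms(1-3) Phi_measurable])
    also have "\<dots> = V (Suc (k t - 1)) t - W (k t - 1) t"
      by (rule INT_PP[OF that])
    finally show ?thesis .
  qed
  have kinf: "filterlim (\<lambda>t. real (k t)) at_top at_top"
    by (rule filterlim_compose[OF filterlim_real_sequentially assms(4)])
  have r0: "(r \<longlongrightarrow> 0) at_top"
    using smalloD_tendsto[OF assms(5)] unfolding r_def .
  have ev_k: "eventually (\<lambda>t. 2 \<le> k t) at_top"
    using assms(4) by (simp add: filterlim_at_top)
  have ev_r: "eventually (\<lambda>t. r t < 1/2) at_top"
    using r0 by (rule order_tendstoD) simp
  have ev_t: "eventually (\<lambda>t::real. 0 < t) at_top" by (rule eventually_gt_at_top)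
  have e1: "(e \<longlongrightarrow> 1) at_top"
  proof -
    have g: "((\<lambda>x::real. 2 * (x - 1) / (2 * (x - 1) - 1)) \<longlongrightarrow> 1) at_top" by real_asymp
    have "((\<lambda>t. 2 * (real (k t) - 1) / (2 * (real (k t) - 1) - 1)) \<longlongrightarrow> 1) at_top"
      by (rule filterlim_compose[OF g kinf])
    moreover have "eventually (\<lambda>t. 2 * (real (k t) - 1) / (2 * (real (k t) - 1) - 1) = e t) at_top"
      using ev_k by eventually_elim (simp add: e_def of_nat_diff)
    ultimately show ?thesis by (rule Lim_transform_eventually)
  qed
  have up: "((\<lambda>t. e t / (1 - r t)) \<longlongrightarrow> 1) at_top"
    using tendsto_divide[OF e1 tendsto_diff[OF tendsto_const[of 1] r0]] by simp
  have bounds: "eventually (\<lambda>t. e t \<le> E t / T t \<and> E t / T t \<le> e t / (1 - r t)) at_top"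
    using ev_k ev_r ev_t
  proof eventually_elim
    case (elim t)
    define m where "m = k t - 1"
    have km: "Suc m = k t" using elim by (simp add: m_def)
    have m1: "1 \<le> m" using elim by (simp add: m_def)
    have Tm: "T t = 1 / 4 * t ^ (2 * Suc m) / (fact (Suc m))\<^sup>2 * (real (Suc m) / t)\<^sup>2"
      unfolding T_def km ..
    have Tpos: "0 < T t" unfolding Tm using elim by simp
    have em: "e t = 2 * real m / (2 * real m - 1)" unfolding e_def m_def ..
    have epos: "0 < e t" unfolding em using m1 by (simp add: field_simps)
    have Em: "E t = V (Suc m) t - W m t" using EQ[of t] elim by (simp add: m_def km)
    have L: "cc (Suc m) 2 * t^(2*m) = e t * T t" unfolding em Tm by (rule LT) (use elim m1 in auto)
    have rm: "real (Suc m) / t < 1" using elim unfolding r_def km by simp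
    have lo: "e t * T t \<le> E t" using Q_lower[of t m] elim m1 L Em by simp
    have hi: "E t \<le> e t * T t / (1 - r t)" using Q_upper[OF _ rm] elim L Em by (simp add: r_def km)
    have "e t \<le> E t / T t" using lo Tpos by (simp add: le_divide_eq)
    moreover have "E t / T t \<le> e t / (1 - r t)"
    proof -
      have "E t / T t \<le> e t * T t / (1 - r t) / T t" using hi Tpos by (intro divide_right_mono) auto
      also have "\<dots> = e t / (1 - r t)" using Tpos by simp
      finally show ?thesis .
    qed
    ultimately show ?case ..
  qed
  have "((\<lambda>t. E t / T t) \<longlongrightarrow> 1) at_top"
  proof (rule tendsto_sandwich[OF _ _ e1 up])
    show "eventually (\<lambda>t. e t \<le> E t / T t) at_top" using bounds by eventually_elim simp
    show "eventually (\<lambda>t. E t / T t \<le> e t / (1 - r t)) at_top" using bounds by eventually_elim simp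
  qed
  then have "E \<sim>[at_top] T" by (rule asymp_equivI')
  then show ?thesis unfolding E_def T_def .
qed


end
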